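(* Let $z_o\in\Xi_1$. The following are equivalent: (a) $\boldsymbol{\rho}_1(z_o)=\boldsymbol{0}$; (b) $\boldsymbol{\rho}_4\!\left(-\frac{u_o^2}{z_o}\right)=\boldsymbol{0}$; (c) there exists a nonzero constant $\varsigma_o$ with $\boldsymbol{\varphi}_{-,2}(z_o^* )=\varsigma_o\,\boldsymbol{\varphi}_{+,1}(z_o^* )$; (d) there exists a nonzero constant $\hat\varsigma_o$ with $\boldsymbol{\varphi}_{-,2}\!\left(-\frac{u_o^2}{z_o^*}\right)=\hat\varsigma_o\,\boldsymbol{\varphi}_{+,3}\!\left(-\frac{u_o^2}{z_o^*}\right)$.
   Context: Equation and potential. Let $u_o>0$ and $\alpha_1,\alpha_2\in\mathbb{R}$. Let $\boldsymbol{u}(x,t)=(u_1,u_2)^T$ solve $$i\boldsymbol{u}_t+\alpha_1\left[\boldsymbol{u}_{xx}+2\boldsymbol{u}(\|\boldsymbol{u}\|^2-u_o^2)\right]+i\alpha_2\left[\boldsymbol{u}_{xxx}+3\boldsymbol{u}_x\|\boldsymbol{u}\|^2+3\boldsymbol{u}\boldsymbol{u}^\dagger\boldsymbol{u}_x\right]=0,$$ with $\boldsymbol{u}\to\boldsymbol{u}_\pm=\boldsymbol{u}_oe^{ih_\pm}$ as $x\to\pm\infty$, where $h_\pm\in\mathbb{R}$ and $\|\boldsymbol{u}_o\|=u_o$. Assume $\boldsymbol{u}-\boldsymbol{u}_-\in L^1(-\infty,a)$ and $\boldsymbol{u}-\boldsymbol{u}_+\in L^1(a,\infty)$ for all $a$.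 Matrices. Set $$\boldsymbol{U}=\begin{pmatrix}0&-\boldsymbol{u}^\dagger\\ \boldsymbol{u}&0_{2\times2}\end{pmatrix},\qquad \boldsymbol{\sigma}=\mathrm{diag}(1,-1,-1).$$ Uniformization: $k=\frac12\left(z-\frac{u_o^2}{z}\right)$, $\lambda=\frac12\left(z+\frac{u_o^2}{z}\right)$. Lax pair: $$\boldsymbol{X}=-ik\boldsymbol{\sigma}+\boldsymbol{U},$$ $$\boldsymbol{T}=\alpha_1\left[2ik^2\boldsymbol{\sigma}-2k\boldsymbol{U}+i\boldsymbol{\sigma}(\boldsymbol{U}^2+u_o^2-\boldsymbol{U}_x)\right]+\alpha_2\left[-4ik^3\boldsymbol{\sigma}+4k^2\boldsymbol{U}+2ik\boldsymbol{\sigma}(\boldsymbol{U}_x-\boldsymbol{U}^2)-\boldsymbol{U}\boldsymbol{U}_x+\boldsymbol{U}_x\boldsymbol{U}-\boldsymbol{U}_{xx}+2\boldsymbol{U}^3\right].$$ The adjoint pair is $\tilde{\boldsymbol{X}}=-\boldsymbol{X}^T$, $\tilde{\boldsymbol{T}}=-\boldsymbol{T}^T$; that is, $\tilde{\boldsymbol{X}}=ik\boldsymbol{\sigma}+\boldsymbol{U}^*$, with $\tilde{\boldsymbol{T}}$ obtained from $\boldsymbol{T}$ accordingly. Phases: $$h_1=-\lambda x+2\lambda\left[\alpha_1k+\alpha_2(u_o^2-2k^2)\right]t,\qquad h_2=kx-\left[\alpha_1(k^2+\lambda^2)-4\alpha_2k^3\right]t,\qquad \boldsymbol{H}=\mathrm{diag}(h_1,h_2,-h_1).$$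 Eigenvector matrices. With $\boldsymbol{v}^\perp=(v_2^*,-v_1^* )^T$, $$\boldsymbol{G}_\pm(z)=\begin{pmatrix} i&0&u_o/z\\ -\boldsymbol{u}_\pm/z&\boldsymbol{u}_\pm^\perp/u_o&-i\boldsymbol{u}_\pm/u_o\end{pmatrix},\qquad \tilde{\boldsymbol{G}}_\pm(z)=(\boldsymbol{G}_\pm(z^* ))^*.$$ Continuous spectrum: $\Sigma=\mathbb{R}\cup\{|z|=u_o\}$. Jost solutions. For $z\in\Sigma\setminus\{\pm iu_o\}$: - $\boldsymbol{\varphi}_\pm$ solve $\boldsymbol{\varphi}_x=\boldsymbol{X}\boldsymbol{\varphi}$, $\boldsymbol{\varphi}_t=\boldsymbol{T}\boldsymbol{\varphi}$ with $\boldsymbol{\varphi}_\pm=\boldsymbol{G}_\pm e^{i\boldsymbol{H}}+o(1)$ as $x\to\pm\infty$; - $\tilde{\boldsymbol{\varphi}}_\pm$ solve the adjoint system with $\tilde{\boldsymbol{\varphi}}_\pm=\tilde{\boldsymbol{G}}_\pm e^{-i\boldsymbol{H}}+o(1)$. The $l$-th columns are denoted $\boldsymbol{\varphi}_{\pm,l}$ and $\tilde{\boldsymbol{\varphi}}_{\pm,l}$. Regions: - $\Xi_1=\{|z|>u_o,\ \mathrm{Im}\,z>0\}$, - $\Xi_2=\{|z|>u_o,\ \mathrm{Im}\,z<0\}$, - $\Xi_3=\{|z|<u_o,\ \mathrm{Im}\,z<0\}$, - $\Xi_4=\{|z|<u_o,\ \mathrm{Im}\,z>0\}$. Standing analyticity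 facts of the setting (the columns denote their analytic extensions): - $\boldsymbol{\varphi}_{-,1}$ extends to $\Xi_1$, $\boldsymbol{\varphi}_{-,2}$ to $\{\mathrm{Im}\,z<0\}$, $\boldsymbol{\varphi}_{-,3}$ to $\Xi_4$; - $\boldsymbol{\varphi}_{+,1}$ extends to $\Xi_2$, $\boldsymbol{\varphi}_{+,2}$ to $\{\mathrm{Im}\,z>0\}$, $\boldsymbol{\varphi}_{+,3}$ to $\Xi_3$; - $\tilde{\boldsymbol{\varphi}}_{+,1}$ extends to $\Xi_1$, $\tilde{\boldsymbol{\varphi}}_{+,2}$ to $\{\mathrm{Im}\,z<0\}$, $\tilde{\boldsymbol{\varphi}}_{+,3}$ to $\Xi_4$; - $\tilde{\boldsymbol{\varphi}}_{-,1}$ extends to $\Xi_2$, $\tilde{\boldsymbol{\varphi}}_{-,2}$ to $\{\mathrm{Im}\,z>0\}$, $\tilde{\boldsymbol{\varphi}}_{-,3}$ to $\Xi_3$. Auxiliary eigenfunctions. With $\times$ the bilinear cross product on $\mathbb{C}^3$: - $\boldsymbol{\rho}_1=e^{ih_2}[\tilde{\boldsymbol{\varphi}}_{+,1}\times\tilde{\boldsymbol{\varphi}}_{-,2}]$ on $\Xi_1$; - $\boldsymbol{\rho}_2=e^{ih_2}[\tilde{\boldsymbol{\varphi}}_{-,1}\times\tilde{\boldsymbol{\varphi}}_{+,2}]$ on $\Xi_2$; - $\boldsymbol{\rho}_3=e^{ih_2}[\tilde{\boldsymbol{\varphi}}_{+,2}\times\tilde{\boldsymbol{\varphi}}_{-,3}]$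 on $\Xi_3$; - $\boldsymbol{\rho}_4=e^{ih_2}[\tilde{\boldsymbol{\varphi}}_{-,2}\times\tilde{\boldsymbol{\varphi}}_{+,3}]$ on $\Xi_4$. Equalities are understood for all $x,t$, with constants independent of $x,t$. *)

theory Defs
  imports "HOL-Analysis.Analysis"
begin

text \<open>Complex 3-vectors are complex^3, 3x3 matrices are complex^3^3 (row-wise, A$i$j),
  the two-component field is complex^2 (its norm is the Euclidean norm).\<close>

definition kk :: "real \<Rightarrow> complex \<Rightarrow> complex" where
  "kk uo z = (z - complex_of_real (uo^2) / z) / 2"

definition ll :: "real \<Rightarrow> complex \<Rightarrow> complex" where
  "ll uo z = (z + complex_of_real (uo^2) / z) / 2"

definition ph1 :: "real \<Rightarrow> real \<Rightarrow> real \<Rightarrow> real \<Rightarrow> real \<Rightarrow> complex \<Rightarrow> complex" where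
  "ph1 a1 a2 uo x t z =
     - ll uo z * of_real x
     + 2 * ll uo z * (of_real a1 * kk uo z + of_real a2 * (of_real (uo^2) - 2 * (kk uo z)^2)) * of_real t"

definition ph2 :: "real \<Rightarrow> real \<Rightarrow> real \<Rightarrow> real \<Rightarrow> real \<Rightarrow> complex \<Rightarrow> complex" where
  "ph2 a1 a2 uo x t z =
     kk uo z * of_real x
     - (of_real a1 * ((kk uo z)^2 + (ll uo z)^2) - 4 * of_real a2 * (kk uo z)^3) * of_real t"

text \<open>Diagonal entries of H = diag(h1, h2, -h1), indexed by the column l.\<close>
definition phase :: "real \<Rightarrow> real \<Rightarrow> real \<Rightarrow> 3 \<Rightarrow> real \<Rightarrow> real \<Rightarrow> complex \<Rightarrow> complex" where
  "phase a1 a2 uo l x t z =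
     (if l = 1 then ph1 a1 a2 uo x t z
      else if l = 2 then ph2 a1 a2 uo x t z
      else - ph1 a1 a2 uo x t z)"

definition msc :: "complex \<Rightarrow> complex^3^3 \<Rightarrow> complex^3^3" (infixr \<open>*M\<close> 75) where
  "c *M A = (\<chi> i j. c * A $ i $ j)"

definition sigma3 :: "complex^3^3" where
  "sigma3 = vector [vector [1, 0, 0], vector [0, -1, 0], vector [0, 0, -1]]"

definition Umat :: "complex^2 \<Rightarrow> complex^3^3" where
  "Umat v = vector [vector [0, - cnj (v$1), - cnj (v$2)],
                    vector [v$1, 0, 0],
                    vector [v$2, 0, 0]]"

definition Xmat :: "real \<Rightarrow> complex^2 \<Rightarrow> complex \<Rightarrow> complex^3^3" where
  "Xmat uo v z = ((- \<i> * kk uo z) *M sigma3) + Umat v"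

text \<open>T, evaluated with U = Umat v, U_x = Umat vx, U_xx = Umat vxx.\<close>
definition Tmat :: "real \<Rightarrow> real \<Rightarrow> real \<Rightarrow> complex^2 \<Rightarrow> complex^2 \<Rightarrow> complex^2 \<Rightarrow> complex \<Rightarrow> complex^3^3" where
  "Tmat a1 a2 uo v vx vxx z =
     (let k = kk uo z; U = Umat v; Ux = Umat vx; Uxx = Umat vxx in
       of_real a1 *M ((2 * \<i> * k^2) *M sigma3 - (2 * k) *M U
                      + \<i> *M (sigma3 ** (U ** U + mat (of_real (uo^2)) - Ux)))
     + of_real a2 *M ((- 4 * \<i> * k^3) *M sigma3 + (4 * k^2) *M U
                      + (2 * \<i> * k) *M (sigma3 ** (Ux - U ** U))
                      - U ** Ux + Ux ** U - Uxx + 2 *M (U ** U ** U)))"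

definition vperp :: "complex^2 \<Rightarrow> complex^2" where
  "vperp v = vector [cnj (v$2), - cnj (v$1)]"

text \<open>G(z) for boundary value w = u_plus or u_minus.\<close>
definition Gmat :: "real \<Rightarrow> complex^2 \<Rightarrow> complex \<Rightarrow> complex^3^3" where
  "Gmat uo w z =
     vector [vector [\<i>, 0, of_real uo / z],
             vector [- w$1 / z, (vperp w)$1 / of_real uo, - \<i> * w$1 / of_real uo],
             vector [- w$2 / z, (vperp w)$2 / of_real uo, - \<i> * w$2 / of_real uo]]"

definition Gtmat :: "real \<Rightarrow> complex^2 \<Rightarrow> complex \<Rightarrow> complex^3^3" where
  "Gtmat uo w z = (\<chi> i j. cnj (Gmat uo w (cnj z) $ i $ j))"

definition col3 :: "3 \<Rightarrow> complex^3^3 \<Rightarrow> complex^3" where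
  "col3 l A = (\<chi> i. A $ i $ l)"

text \<open>Bilinear (not sesquilinear) cross product on C^3.\<close>
definition cross3c :: "complex^3 \<Rightarrow> complex^3 \<Rightarrow> complex^3" where
  "cross3c a b = vector [a$2 * b$3 - a$3 * b$2, a$3 * b$1 - a$1 * b$3, a$1 * b$2 - a$2 * b$1]"

definition Xi1 :: "real \<Rightarrow> complex set" where "Xi1 uo = {z. cmod z > uo \<and> Im z > 0}"
definition Xi2 :: "real \<Rightarrow> complex set" where "Xi2 uo = {z. cmod z > uo \<and> Im z < 0}"
definition Xi3 :: "real \<Rightarrow> complex set" where "Xi3 uo = {z. cmod z < uo \<and> Im z < 0}"
definition Xi4 :: "real \<Rightarrow> complex set" where "Xi4 uo = {z. cmod z < uo \<and> Im z > 0}"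

text \<open>The defocusing-type Hirota-Manakov equation with its solution hypotheses:
  u with x-derivatives ux, uxx, uxxx and t-derivative ut.\<close>
definition is_solution ::
  "real \<Rightarrow> real \<Rightarrow> real \<Rightarrow> (real \<Rightarrow> real \<Rightarrow> complex^2) \<Rightarrow> (real \<Rightarrow> real \<Rightarrow> complex^2)
   \<Rightarrow> (real \<Rightarrow> real \<Rightarrow> complex^2) \<Rightarrow> (real \<Rightarrow> real \<Rightarrow> complex^2) \<Rightarrow> (real \<Rightarrow> real \<Rightarrow> complex^2) \<Rightarrow> bool" where
  "is_solution a1 a2 uo u ux uxx uxxx ut \<longleftrightarrow>
     (\<forall>x t. ((\<lambda>y. u y t) has_vector_derivative ux x t) (at x)
          \<and> ((\<lambda>y. ux y t) has_vector_derivative uxx x t) (at x)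
          \<and> ((\<lambda>y. uxx y t) has_vector_derivative uxxx x t) (at x)
          \<and> ((\<lambda>s. u x s) has_vector_derivative ut x t) (at t)
          \<and> \<i> *s ut x t
            + of_real a1 *s (uxx x t + (2 * of_real ((norm (u x t))^2 - uo^2)) *s u x t)
            + (\<i> * of_real a2) *s (uxxx x t + (3 * of_real ((norm (u x t))^2)) *s ux x t
                 + (3 * (cnj (u x t $ 1) * ux x t $ 1 + cnj (u x t $ 2) * ux x t $ 2)) *s u x t)
            = 0)"

definition lax_sol ::
  "real \<Rightarrow> real \<Rightarrow> real \<Rightarrow> (real \<Rightarrow> real \<Rightarrow> complex^2) \<Rightarrow> (real \<Rightarrow> real \<Rightarrow> complex^2)
   \<Rightarrow> (real \<Rightarrow> real \<Rightarrow> complex^2) \<Rightarrow> complex \<Rightarrow> (real \<Rightarrow> real \<Rightarrow> complex^3) \<Rightarrow> bool" where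
  "lax_sol a1 a2 uo u ux uxx z f \<longleftrightarrow>
     (\<forall>x t. ((\<lambda>y. f y t) has_vector_derivative (Xmat uo (u x t) z *v f x t)) (at x)
          \<and> ((\<lambda>s. f x s) has_vector_derivative
                (Tmat a1 a2 uo (u x t) (ux x t) (uxx x t) z *v f x t)) (at t))"

definition adj_lax_sol ::
  "real \<Rightarrow> real \<Rightarrow> real \<Rightarrow> (real \<Rightarrow> real \<Rightarrow> complex^2) \<Rightarrow> (real \<Rightarrow> real \<Rightarrow> complex^2)
   \<Rightarrow> (real \<Rightarrow> real \<Rightarrow> complex^2) \<Rightarrow> complex \<Rightarrow> (real \<Rightarrow> real \<Rightarrow> complex^3) \<Rightarrow> bool" where
  "adj_lax_sol a1 a2 uo u ux uxx z f \<longleftrightarrow>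
     (\<forall>x t. ((\<lambda>y. f y t) has_vector_derivative (- transpose (Xmat uo (u x t) z) *v f x t)) (at x)
          \<and> ((\<lambda>s. f x s) has_vector_derivative
                (- transpose (Tmat a1 a2 uo (u x t) (ux x t) (uxx x t) z) *v f x t)) (at t))"

text \<open>Analytically extended Jost column l (of phi_pm), on the open region R:
  solves the Lax pair for every z in R, is holomorphic in z on R (componentwise), and
  exp(-i h_l) phi_l tends to the l-th column of G_pm as x \<rightarrow> \<plusminus>\<infinity> (filter F = at_top / at_bot).\<close>
definition jost_col ::
  "real \<Rightarrow> real \<Rightarrow> real \<Rightarrow> (real \<Rightarrow> real \<Rightarrow> complex^2) \<Rightarrow> (real \<Rightarrow> real \<Rightarrow> complex^2)
   \<Rightarrow> (real \<Rightarrow> real \<Rightarrow> complex^2) \<Rightarrow> complex^2 \<Rightarrow> real filter \<Rightarrow> 3 \<Rightarrow> complex set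
   \<Rightarrow> (real \<Rightarrow> real \<Rightarrow> complex \<Rightarrow> complex^3) \<Rightarrow> bool" where
  "jost_col a1 a2 uo u ux uxx w F l R phi \<longleftrightarrow>
     (\<forall>z\<in>R. lax_sol a1 a2 uo u ux uxx z (\<lambda>x t. phi x t z)
        \<and> (\<forall>t. ((\<lambda>x. exp (- \<i> * phase a1 a2 uo l x t z) *s phi x t z)
                 \<longlongrightarrow> col3 l (Gmat uo w z)) F))
     \<and> (\<forall>x t j. (\<lambda>z. phi x t z $ j) holomorphic_on R)"

definition adj_jost_col ::
  "real \<Rightarrow> real \<Rightarrow> real \<Rightarrow> (real \<Rightarrow> real \<Rightarrow> complex^2) \<Rightarrow> (real \<Rightarrow> real \<Rightarrow> complex^2)
   \<Rightarrow> (real \<Rightarrow> real \<Rightarrow> complex^2) \<Rightarrow> complex^2 \<Rightarrow> real filter \<Rightarrow> 3 \<Rightarrow> complex set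
   \<Rightarrow> (real \<Rightarrow> real \<Rightarrow> complex \<Rightarrow> complex^3) \<Rightarrow> bool" where
  "adj_jost_col a1 a2 uo u ux uxx w F l R phi \<longleftrightarrow>
     (\<forall>z\<in>R. adj_lax_sol a1 a2 uo u ux uxx z (\<lambda>x t. phi x t z)
        \<and> (\<forall>t. ((\<lambda>x. exp (\<i> * phase a1 a2 uo l x t z) *s phi x t z)
                 \<longlongrightarrow> col3 l (Gtmat uo w z)) F))
     \<and> (\<forall>x t j. (\<lambda>z. phi x t z $ j) holomorphic_on R)"

end

theory Submission
  imports Defs
begin

definition dotc :: "complex^3 \<Rightarrow> complex^3 \<Rightarrow> complex" where
  "dotc l v = (\<Sum>i\<in>UNIV. l$i * v$i)"

definition vcnj :: "complex^3 \<Rightarrow> complex^3" where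
  "vcnj v = (\<chi> i. cnj (v$i))"

lemma sc3: "(r *\<^sub>R (v::complex^3)) $ i = of_real r * (v $ i)"
  by (metis vector_scaleR_component scaleR_conv_of_real)

lemma linear_dotc: "linear (dotc l)"
  by (rule linearI) (simp_all add: dotc_def sum.distrib algebra_simps sum_distrib_left sc3 scaleR_sum_right)

lemma bl_dotc: "bounded_linear (dotc l)"
  using linear_dotc linear_conv_bounded_linear by blast

lemma linear_vcnj: "linear vcnj"
  by (rule linearI) (simp_all add: vcnj_def vec_eq_iff sc3)

lemma bl_vcnj: "bounded_linear vcnj"
  using linear_vcnj linear_conv_bounded_linear by blast

lemma kk_cnj: "kk uo (cnj z) = cnj (kk uo z)"
  by (simp add: kk_def)
lemma ll_cnj: "ll uo (cnj z) = cnj (ll uo z)"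
  by (simp add: ll_def)
lemma ph1_cnj: "ph1 a1 a2 uo x t (cnj z) = cnj (ph1 a1 a2 uo x t z)"
  by (simp add: ph1_def kk_cnj ll_cnj)
lemma ph2_cnj: "ph2 a1 a2 uo x t (cnj z) = cnj (ph2 a1 a2 uo x t z)"
  by (simp add: ph2_def kk_cnj ll_cnj)
lemma phase_cnj: "phase a1 a2 uo l x t (cnj z) = cnj (phase a1 a2 uo l x t z)"
  by (simp add: phase_def ph1_cnj ph2_cnj)

lemma kk_inv: "z \<noteq> 0 \<Longrightarrow> uo \<noteq> 0 \<Longrightarrow> kk uo (- of_real (uo^2) / z) = kk uo z"
  by (simp add: kk_def field_simps)
lemma ll_inv: "z \<noteq> 0 \<Longrightarrow> uo \<noteq> 0 \<Longrightarrow> ll uo (- of_real (uo^2) / z) = - ll uo z"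
  by (simp add: ll_def field_simps)
lemma ph1_inv: "z \<noteq> 0 \<Longrightarrow> uo \<noteq> 0 \<Longrightarrow> ph1 a1 a2 uo x t (- of_real (uo^2) / z) = - ph1 a1 a2 uo x t z"
  unfolding ph1_def kk_inv[of z uo] ll_inv[of z uo] by simp
lemma ph2_inv: "z \<noteq> 0 \<Longrightarrow> uo \<noteq> 0 \<Longrightarrow> ph2 a1 a2 uo x t (- of_real (uo^2) / z) = ph2 a1 a2 uo x t z"
  unfolding ph2_def kk_inv[of z uo] ll_inv[of z uo] by simp
lemma Xmat_inv: "z \<noteq> 0 \<Longrightarrow> uo \<noteq> 0 \<Longrightarrow> Xmat uo v (- of_real (uo^2) / z) = Xmat uo v z"
  unfolding Xmat_def kk_inv[of z uo] by simp

lemma Xmat_entries: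
  "Xmat uo v z $ 1 $ 1 = - \<i> * kk uo z" "Xmat uo v z $ 1 $ 2 = - cnj (v$1)" "Xmat uo v z $ 1 $ 3 = - cnj (v$2)"
  "Xmat uo v z $ 2 $ 1 = v$1" "Xmat uo v z $ 2 $ 2 = \<i> * kk uo z" "Xmat uo v z $ 2 $ 3 = 0"
  "Xmat uo v z $ 3 $ 1 = v$2" "Xmat uo v z $ 3 $ 2 = 0" "Xmat uo v z $ 3 $ 3 = \<i> * kk uo z"
  by (simp_all add: Xmat_def msc_def sigma3_def Umat_def)

lemma Xmat_cnj: "vcnj (Xmat uo v (cnj z) *v p) = (- transpose (Xmat uo v z)) *v vcnj p"
  by (simp add: vec_eq_iff forall_3 matrix_vector_mult_def sum_3 transpose_def vcnj_def Xmat_entries kk_cnj)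

lemma norm_le_sum3: "norm (x::complex^3) \<le> (\<Sum>i\<in>UNIV. norm (x$i))"
  unfolding norm_vec_def by (rule L2_set_le_sum) simp

lemma mv_norm_bound:
  "norm ((A::complex^3^3) *v (v::complex^3)) \<le> (\<Sum>i\<in>UNIV. \<Sum>j\<in>UNIV. cmod (A$i$j)) * norm v"
proof -
  have "norm (A *v v) \<le> (\<Sum>i\<in>UNIV. norm ((A *v v)$i))" using norm_le_sum3[of "A *v v"] by simp
  also have "\<dots> \<le> (\<Sum>i\<in>UNIV. (\<Sum>j\<in>UNIV. cmod (A$i$j)) * norm v)"
  proof (rule sum_mono)
    fix i :: 3
    have "norm ((A *v v)$i) = cmod (\<Sum>j\<in>UNIV. A$i$j * v$j)"
      by (simp add: matrix_vector_mult_def)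
    also have "\<dots> \<le> (\<Sum>j\<in>UNIV. cmod (A$i$j * v$j))" by (rule norm_sum)
    also have "\<dots> \<le> (\<Sum>j\<in>UNIV. cmod (A$i$j) * norm v)"
      by (rule sum_mono) (simp only: norm_mult, intro mult_left_mono Finite_Cartesian_Product.norm_nth_le norm_ge_zero)
    finally show "norm ((A *v v)$i) \<le> (\<Sum>j\<in>UNIV. cmod (A$i$j)) * norm v"
      by (simp add: sum_distrib_right)
  qed
  also have "\<dots> = (\<Sum>i\<in>UNIV. \<Sum>j\<in>UNIV. cmod (A$i$j)) * norm v"
    by (simp add: sum_distrib_right)
  finally show ?thesis .
qed

lemma exp_weight_deriv:
  assumes "(g has_real_derivative g') (at s)"
  shows "((\<lambda>s. exp (c * s) * g s) has_real_derivative exp (c * s) * (g' + c * g s)) (at s)"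
proof -
  have e: "((\<lambda>s. exp (c * s)) has_real_derivative exp (c * s) * c) (at s)"
    using DERIV_fun_exp[OF DERIV_cmult_Id[of c]] by simp
  show ?thesis
    by (rule DERIV_cong[OF DERIV_mult'[OF e assms]]) (simp add: algebra_simps)
qed

lemma gronwall_zero:
  fixes f :: "real \<Rightarrow> complex^3" and A :: "real \<Rightarrow> complex^3^3"
  assumes fd: "\<And>x. (f has_vector_derivative (A x *v f x)) (at x)"
    and Ac: "\<And>i j. continuous_on UNIV (\<lambda>x. A x $ i $ j)"
    and f0: "f x0 = 0"
  shows "f x = 0"
proof -
  define K where "K x = (\<Sum>i\<in>UNIV. \<Sum>j\<in>UNIV. cmod (A x $i$j))" for x
  have Kc: "continuous_on UNIV K"
    unfolding K_def by (intro continuous_on_sum continuous_on_norm Ac)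
  have KB: "norm (A s *v v) \<le> K s * norm v" for s v
    unfolding K_def by (rule mv_norm_bound)
  define a where "a = min x x0"
  define b where "b = max x x0"
  have ab: "a \<le> b" by (simp add: a_def b_def)
  have Kab: "continuous_on {a..b} K" by (rule continuous_on_subset[OF Kc]) simp
  obtain xm where xm: "\<forall>y\<in>{a..b}. K y \<le> K xm"
    using continuous_attains_sup[OF compact_Icc _ Kab] ab by auto
  define Mb where "Mb = max (K xm) 0"
  have Mb: "\<And>s. s \<in> {a..b} \<Longrightarrow> K s \<le> Mb" "Mb \<ge> 0"
    using xm by (force simp: Mb_def)+
  define g where "g s = f s \<bullet> f s" for s
  have gd: "(g has_real_derivative 2 * (f s \<bullet> (A s *v f s))) (at s)" for s
  proof -
    have "((\<lambda>s. f s \<bullet> f s) has_derivative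
           (\<lambda>h. f s \<bullet> (h *\<^sub>R (A s *v f s)) + (h *\<^sub>R (A s *v f s)) \<bullet> f s)) (at s)"
      using fd[of s] unfolding has_vector_derivative_def
      by (intro has_derivative_inner)
    then show ?thesis unfolding g_def
      by (rule has_derivative_imp_has_field_derivative) (simp add: inner_commute algebra_simps)
  qed
  have gnn: "g s \<ge> 0" for s unfolding g_def by simp
  have gb: "\<bar>2 * (f s \<bullet> (A s *v f s))\<bar> \<le> 2 * Mb * g s" if "s \<in> {a..b}" for s
  proof -
    have "\<bar>f s \<bullet> (A s *v f s)\<bar> \<le> norm (f s) * norm (A s *v f s)"
      by (rule Cauchy_Schwarz_ineq2)
    also have "\<dots> \<le> norm (f s) * (K s * norm (f s))"
      by (intro mult_left_mono KB) simp
    also have "\<dots> \<le> norm (f s) * (Mb * norm (f s))"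
      using Mb(1)[OF that] by (intro mult_left_mono mult_right_mono) auto
    also have "\<dots> = Mb * g s"
      by (simp add: g_def power2_norm_eq_inner[symmetric] power2_eq_square)
    finally show ?thesis by simp
  qed
  have g0: "g x0 = 0" using f0 by (simp add: g_def)
  have gc: "continuous_on UNIV g"
    by (rule continuous_at_imp_continuous_on) (blast intro: DERIV_isCont gd)
  have gdc: "continuous_on UNIV (\<lambda>s. exp (c * s) * g s)" for c
    by (rule continuous_at_imp_continuous_on) (blast intro: DERIV_isCont exp_weight_deriv gd)
  have "g x = 0"
  proof (cases "x0 \<le> x")
    case True
    have "(\<lambda>s. exp ((-2 * Mb) * s) * g s) x0 \<ge> (\<lambda>s. exp ((-2 * Mb) * s) * g s) x"
    proof (rule DERIV_nonpos_imp_decreasing_open[OF True])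
      fix s assume s: "x0 < s" "s < x"
      have sab: "s \<in> {a..b}" using s True by (simp add: a_def b_def)
      have "2 * (f s \<bullet> (A s *v f s)) \<le> 2 * Mb * g s" using gb[OF sab] by linarith
      then have "2 * (f s \<bullet> (A s *v f s)) + (-2 * Mb) * g s \<le> 0" by linarith
      then have "exp ((-2 * Mb) * s) * (2 * (f s \<bullet> (A s *v f s)) + (-2 * Mb) * g s) \<le> 0"
        by (rule mult_nonneg_nonpos[OF less_imp_le[OF exp_gt_zero]])
      then show "\<exists>y. DERIV (\<lambda>s. exp ((-2 * Mb) * s) * g s) s :> y \<and> y \<le> 0"
        using exp_weight_deriv[OF gd] by blast
    next
      show "continuous_on {x0..x} (\<lambda>s. exp ((-2 * Mb) * s) * g s)"
        by (rule continuous_on_subset[OF gdc]) simp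
    qed
    then have h: "exp ((-2 * Mb) * x) * g x \<le> 0" using g0 by simp
    have "g x \<le> 0"
    proof (rule ccontr)
      assume "\<not> g x \<le> 0"
      then have "exp ((-2 * Mb) * x) * g x > 0" by simp
      then show False using h by simp
    qed
    then show ?thesis using gnn[of x] by simp
  next
    case False
    then have F: "x \<le> x0" by simp
    have "(\<lambda>s. exp ((2 * Mb) * s) * g s) x \<le> (\<lambda>s. exp ((2 * Mb) * s) * g s) x0"
    proof (rule DERIV_nonneg_imp_increasing_open[OF F])
      fix s assume s: "x < s" "s < x0"
      have sab: "s \<in> {a..b}" using s F by (simp add: a_def b_def)
      have "2 * (f s \<bullet> (A s *v f s)) \<ge> - (2 * Mb * g s)" using gb[OF sab] by linarith
      then have "2 * (f s \<bullet> (A s *v f s)) + (2 * Mb) * g s \<ge> 0" by linarith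
      then have "exp ((2 * Mb) * s) * (2 * (f s \<bullet> (A s *v f s)) + (2 * Mb) * g s) \<ge> 0"
        by (rule mult_nonneg_nonneg[OF less_imp_le[OF exp_gt_zero]])
      then show "\<exists>y. DERIV (\<lambda>s. exp ((2 * Mb) * s) * g s) s :> y \<and> y \<ge> 0"
        using exp_weight_deriv[OF gd] by blast
    next
      show "continuous_on {x..x0} (\<lambda>s. exp ((2 * Mb) * s) * g s)"
        by (rule continuous_on_subset[OF gdc]) simp
    qed
    then have h: "exp ((2 * Mb) * x) * g x \<le> 0" using g0 by simp
    have "g x \<le> 0"
    proof (rule ccontr)
      assume "\<not> g x \<le> 0"
      then have "exp ((2 * Mb) * x) * g x > 0" by simp
      then show False using h by simp
    qed
    then show ?thesis using gnn[of x] by simp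
  qed
  then show ?thesis by (simp add: g_def)
qed

lemma tail_small:
  fixes P :: "real \<Rightarrow> real"
  assumes Pn: "\<And>x. 0 \<le> P x" and Pc: "continuous_on UNIV P" and Pi: "P integrable_on {a0..}"
    and e: "e > 0"
  shows "\<exists>b\<ge>a0. \<forall>x y. b \<le> x \<longrightarrow> x \<le> y \<longrightarrow> integral {x..y} P \<le> e"
proof -
  have ai: "P absolutely_integrable_on {a0..}"
    by (rule nonnegative_absolutely_integrable_1[OF Pi]) (simp add: Pn)
  have lim: "((\<lambda>b. set_lebesgue_integral lebesgue {a0..b} P) \<longlongrightarrow> set_lebesgue_integral lebesgue {a0..} P) at_top"
    by (rule tendsto_set_lebesgue_integral_at_top) (auto simp: ai)
  have eq: "set_lebesgue_integral lebesgue {a0..b} P = integral {a0..b} P" for b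
    by (rule set_lebesgue_integral_eq_integral(2)[OF set_integrable_subset[OF ai]]) auto
  define L where "L = set_lebesgue_integral lebesgue {a0..} P"
  have lim2: "((\<lambda>b. integral {a0..b} P) \<longlongrightarrow> L) at_top"
    using lim unfolding eq L_def .
  have "eventually (\<lambda>b. dist (integral {a0..b} P) L < e/2) at_top"
    using lim2[unfolded tendsto_iff, rule_format, of "e/2"] e by simp
  then obtain b0 where b0: "\<And>b. b \<ge> b0 \<Longrightarrow> \<bar>integral {a0..b} P - L\<bar> < e/2"
    by (auto simp: eventually_at_top_linorder dist_real_def)
  have "\<forall>x y. max a0 b0 \<le> x \<longrightarrow> x \<le> y \<longrightarrow> integral {x..y} P \<le> e"
  proof (intro allI impI)
    fix x y assume xy: "max a0 b0 \<le> x" "x \<le> y"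
    have "P integrable_on {a0..y}"
      by (intro integrable_continuous_interval continuous_on_subset[OF Pc]) auto
    then have "integral {a0..x} P + integral {x..y} P = integral {a0..y} P"
      using xy by (intro Henstock_Kurzweil_Integration.integral_combine) auto
    moreover have "\<bar>integral {a0..x} P - L\<bar> < e/2" "\<bar>integral {a0..y} P - L\<bar> < e/2"
      using xy b0[of x] b0[of y] by auto
    ultimately show "integral {x..y} P \<le> e" by linarith
  qed
  then show ?thesis by (intro exI[of _ "max a0 b0"]) auto
qed

lemma GL:
  fixes w q :: "3 \<Rightarrow> real \<Rightarrow> complex" and d :: "3 \<Rightarrow> complex" and P :: "real \<Rightarrow> real"
  assumes wd: "\<And>j x. (w j has_vector_derivative (d j * w j x + q j x)) (at x)"
    and dre: "\<And>j. Re (d j) \<ge> 0"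
    and qb: "\<And>j x. cmod (q j x) \<le> P x * (\<Sum>i\<in>UNIV. cmod (w i x))"
    and Pn: "\<And>x. 0 \<le> P x" and Pc: "continuous_on UNIV P"
    and tail: "\<And>x y. b \<le> x \<Longrightarrow> x \<le> y \<Longrightarrow> integral {x..y} P \<le> 1/6"
    and wl: "\<And>j. (w j \<longlongrightarrow> 0) at_top"
  shows "\<forall>x\<ge>b. \<forall>j. w j x = 0"
proof -
  define W where "W x = (\<Sum>i\<in>UNIV. cmod (w i x))" for x
  have wc: "continuous_on UNIV (w j)" for j
    by (rule continuous_on_vector_derivative) (use wd in blast)
  have Wc: "continuous_on UNIV W"
    unfolding W_def by (intro continuous_on_sum continuous_on_norm wc)
  have Wl: "(W \<longlongrightarrow> 0) at_top"
  proof -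
    have "((\<lambda>x. \<Sum>i\<in>UNIV. cmod (w i x)) \<longlongrightarrow> (\<Sum>i\<in>(UNIV::3 set). 0)) at_top"
      by (intro tendsto_sum tendsto_norm_zero wl)
    then show ?thesis by (simp add: W_def[abs_def])
  qed
  have Wn: "W x \<ge> 0" for x unfolding W_def by (simp add: sum_nonneg)
  have "eventually (\<lambda>x. dist (W x) 0 < 1) at_top" using Wl by (simp add: tendsto_iff)
  then obtain c where c0: "\<And>x. x \<ge> c \<Longrightarrow> \<bar>W x\<bar> < 1"
    by (auto simp: eventually_at_top_linorder dist_real_def)
  have c: "\<And>x. x \<ge> c \<Longrightarrow> W x \<le> 1" using c0 by force
  have Wbc: "continuous_on {b..max b c} W" by (rule continuous_on_subset[OF Wc]) simp
  obtain xm where xm: "\<forall>y\<in>{b..max b c}. W y \<le> W xm"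
    using continuous_attains_sup[OF compact_Icc _ Wbc] by auto
  have Wbd: "W x \<le> max (W xm) 1" if "x \<ge> b" for x
  proof (cases "x \<le> max b c")
    case True then show ?thesis using xm that by force
  next
    case False then have "W x \<le> 1" using c[of x] by linarith
    then show ?thesis by linarith
  qed
  have bdd: "bdd_above (W ` {b..})"
    using Wbd by (auto simp: bdd_above_def)
  define N where "N = Sup (W ` {b..})"
  have WN: "W x \<le> N" if "x \<ge> b" for x
    unfolding N_def by (rule cSup_upper) (use bdd that in auto)
  have N0: "N \<ge> 0" using WN[of b] Wn[of b] by simp
  have key: "cmod (w j x) \<le> N / 6" if xb: "x \<ge> b" for x j
  proof -
    have step: "cmod (w j x) \<le> cmod (w j y) + N/6" if xy: "x \<le> y" for y
    proof -
      define g where "g s = exp (d j * of_real (x - s)) * w j s" for s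
      define h where "h s = exp (d j * of_real (x - s)) * q j s" for s
      have gd: "(g has_vector_derivative h s) (at s)" for s
      proof -
        have l1: "((\<lambda>s. d j * of_real (x - s)) has_vector_derivative (- d j)) (at s)"
          using has_vector_derivative_mult_right[OF has_vector_derivative_of_real[of "\<lambda>s. x - s" "-1"], of "at s" "d j"]
          by (auto intro!: derivative_eq_intros)
        have l2: "((\<lambda>s. exp (d j * of_real (x - s))) has_vector_derivative (- d j) * exp (d j * of_real (x - s))) (at s)"
          using field_vector_diff_chain_at[OF l1 DERIV_exp] by (simp add: o_def)
        have "(g has_vector_derivative
                 exp (d j * of_real (x - s)) * (d j * w j s + q j s) + (- d j) * exp (d j * of_real (x - s)) * w j s) (at s)"
          unfolding g_def by (rule has_vector_derivative_mult[OF l2 wd])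
        then show ?thesis by (simp add: h_def algebra_simps)
      qed
      have hi: "(h has_integral (g y - g x)) {x..y}"
        by (rule fundamental_theorem_of_calculus[OF xy]) (auto intro: has_vector_derivative_at_within gd)
      have gx: "g x = w j x" by (simp add: g_def)
      have ee: "cmod (exp (d j * of_real (x - s))) \<le> 1" if "s \<ge> x" for s
        using dre[of j] that by (simp add: mult_nonneg_nonpos)
      have "w j x = g y - integral {x..y} h"
        using hi gx by (simp add: integral_unique)
      then have "cmod (w j x) \<le> cmod (g y) + norm (integral {x..y} h)"
        by (metis norm_triangle_ineq4)
      also have "cmod (g y) \<le> cmod (w j y)"
        unfolding g_def norm_mult using ee[OF xy] by (simp add: mult_left_le_one_le)
      also have "norm (integral {x..y} h) \<le> integral {x..y} (\<lambda>s. N * P s)"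
      proof (rule integral_norm_bound_integral)
        show "h integrable_on {x..y}" using hi by blast
        show "(\<lambda>s. N * P s) integrable_on {x..y}"
          by (intro integrable_continuous_interval continuous_intros continuous_on_subset[OF Pc]) auto
        fix s assume s: "s \<in> {x..y}"
        have "cmod (h s) \<le> cmod (q j s)"
          unfolding h_def norm_mult using ee[of s] s by (simp add: mult_left_le_one_le)
        also have "\<dots> \<le> P s * W s" using qb by (simp add: W_def)
        also have "\<dots> \<le> P s * N" using WN[of s] s xb Pn[of s] by (intro mult_left_mono) auto
        finally show "norm (h s) \<le> N * P s" by (simp add: mult.commute)
      qed
      also have "integral {x..y} (\<lambda>s. N * P s) = N * integral {x..y} P"
        by simp
      also have "\<dots> \<le> N * (1/6)" using tail[OF xb xy] N0 by (intro mult_left_mono) auto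
      finally show ?thesis by simp
    qed
    have "((\<lambda>y. cmod (w j y) + N/6) \<longlongrightarrow> 0 + N/6) at_top"
      by (intro tendsto_add tendsto_norm_zero wl tendsto_const)
    then have lim: "((\<lambda>y. cmod (w j y) + N/6) \<longlongrightarrow> N/6) at_top" by simp
    have ev: "eventually (\<lambda>y. cmod (w j x) \<le> cmod (w j y) + N/6) at_top"
      unfolding eventually_at_top_linorder using step by blast
    show ?thesis
      by (rule tendsto_lowerbound[OF lim ev]) simp
  qed
  have WN2: "W x \<le> N/2" if "x \<ge> b" for x
  proof -
    have "W x \<le> (\<Sum>i\<in>(UNIV::3 set). N/6)" unfolding W_def by (rule sum_mono) (use key that in auto)
    then show ?thesis by simp
  qed
  have "N \<le> N/2" unfolding N_def
    by (rule cSup_least) (use WN2 in \<open>auto simp: N_def\<close>)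
  then have N00: "N = 0" using N0 by simp
  show ?thesis
  proof (intro allI impI)
    fix x j assume "x \<ge> b"
    then have "cmod (w j x) \<le> 0" using key[of x j] N00 by simp
    then show "w j x = 0" by simp
  qed
qed

lemma dotc_scale: "dotc l (c *s v) = c * dotc l v"
  by (simp add: dotc_def sum_distrib_left algebra_simps)
lemma dotc_add: "dotc l (a + b) = dotc l a + dotc l b"
  by (simp add: dotc_def sum.distrib algebra_simps)
lemma dotc_diff: "dotc l (a - b) = dotc l a - dotc l b"
  by (simp add: dotc_def sum_subtractf algebra_simps)
lemma dotc_zero: "dotc l 0 = 0"
  by (simp add: dotc_def)

lemma dotc_mv_lin:
  fixes a :: "3 \<Rightarrow> complex" and r :: "3 \<Rightarrow> complex^3"
  shows "dotc l ((E::complex^3^3) *v (\<Sum>i\<in>UNIV. (a i) *s r i)) = (\<Sum>i\<in>UNIV. a i * dotc l (E *v r i))"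
  by (simp add: dotc_def matrix_vector_mult_def sum_3 algebra_simps)

lemma dotc_bound:
  assumes "\<And>a b. cmod ((E::complex^3^3)$a$b) \<le> \<delta>"
  shows "cmod (dotc l (E *v r)) \<le> (\<Sum>a\<in>UNIV. cmod (l$a)) * (\<Sum>b\<in>UNIV. cmod (r$b)) * \<delta>"
proof -
  have "cmod (dotc l (E *v r)) = cmod (\<Sum>a\<in>UNIV. \<Sum>b\<in>UNIV. l$a * E$a$b * r$b)"
    by (simp add: dotc_def matrix_vector_mult_def sum_distrib_left mult.assoc)
  also have "\<dots> \<le> (\<Sum>a\<in>UNIV. \<Sum>b\<in>UNIV. cmod (l$a * E$a$b * r$b))"
    by (rule order_trans[OF norm_sum sum_mono[OF norm_sum]])
  also have "\<dots> \<le> (\<Sum>a\<in>UNIV. \<Sum>b\<in>UNIV. cmod (l$a) * cmod (r$b) * \<delta>)"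
    unfolding norm_mult
  proof (intro sum_mono)
    fix a b :: 3
    have "cmod (l$a) * cmod (E$a$b) * cmod (r$b) = (cmod (l$a) * cmod (r$b)) * cmod (E$a$b)"
      by (simp add: ac_simps)
    also have "\<dots> \<le> (cmod (l$a) * cmod (r$b)) * \<delta>"
      by (rule mult_left_mono[OF assms]) simp
    finally show "cmod (l$a) * cmod (E$a$b) * cmod (r$b) \<le> cmod (l$a) * cmod (r$b) * \<delta>" .
  qed
  also have "\<dots> = (\<Sum>a\<in>UNIV. cmod (l$a)) * (\<Sum>b\<in>UNIV. cmod (r$b)) * \<delta>"
    by (simp add: sum_distrib_left sum_distrib_right, rule sum.swap)
  finally show ?thesis .
qed

lemma uniq_top:
  fixes f :: "real \<Rightarrow> complex^3" and B :: "real \<Rightarrow> complex^3^3" and Binf :: "complex^3^3"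
    and l r :: "3 \<Rightarrow> complex^3" and n mu :: "3 \<Rightarrow> complex" and th :: "real \<Rightarrow> complex" and c :: complex
    and del :: "real \<Rightarrow> real"
  assumes fd: "\<And>x. (f has_vector_derivative (B x *v f x)) (at x)"
    and thd: "\<And>x. (th has_vector_derivative c) (at x)"
    and eig: "\<And>j g. dotc (l j) (Binf *v g) = mu j * dotc (l j) g"
    and dec: "\<And>g. g = (\<Sum>i\<in>UNIV. (dotc (l i) g / n i) *s r i)"
    and pert: "\<And>x a b. cmod ((B x - Binf) $ a $ b) \<le> del x"
    and delc: "continuous_on UNIV del"
    and deli: "del integrable_on {a0..}"
    and Bc: "\<And>a b. continuous_on UNIV (\<lambda>x. B x $ a $ b)"
    and re: "\<And>j. Re (mu j + \<i> * c) \<ge> 0"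
    and lim: "((\<lambda>x. exp (\<i> * th x) *s f x) \<longlongrightarrow> 0) at_top"
  shows "f x = 0"
proof -
  define K where "K = (\<Sum>j\<in>UNIV. \<Sum>i\<in>UNIV. (\<Sum>a\<in>UNIV. cmod (l j $ a)) * (\<Sum>b\<in>UNIV. cmod (r i $ b)) / cmod (n i))"
  define P where "P x = K * del x" for x
  define w where "w j x = exp (\<i> * th x) * dotc (l j) (f x)" for j x
  define q where "q j x = exp (\<i> * th x) * dotc (l j) ((B x - Binf) *v f x)" for j x
  have dn: "del x \<ge> 0" for x using pert[of x 1 1] by (meson norm_ge_zero order_trans)
  have K0: "K \<ge> 0" unfolding K_def by (intro sum_nonneg mult_nonneg_nonneg divide_nonneg_nonneg) auto
  have Pn: "P x \<ge> 0" for x unfolding P_def using K0 dn by simp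
  have Pc: "continuous_on UNIV P" unfolding P_def[abs_def] by (intro continuous_intros delc)
  have Pi: "P integrable_on {a0..}" unfolding P_def[abs_def] using integrable_on_cmult_left[OF deli, of K] by simp
  have wd: "(w j has_vector_derivative ((mu j + \<i> * c) * w j x + q j x)) (at x)" for j x
  proof -
    have e: "((\<lambda>x. exp (\<i> * th x)) has_vector_derivative (\<i> * c) * exp (\<i> * th x)) (at x)"
      using field_vector_diff_chain_at[OF has_vector_derivative_mult_right[OF thd, of \<i>] DERIV_exp]
      by (simp add: o_def)
    have dd: "((\<lambda>x. dotc (l j) (f x)) has_vector_derivative dotc (l j) (B x *v f x)) (at x)"
      using bounded_linear.has_vector_derivative[OF bl_dotc fd] .
    have D: "((\<lambda>x. exp (\<i> * th x) * dotc (l j) (f x)) has_vector_derivative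
           exp (\<i> * th x) * dotc (l j) (B x *v f x) + (\<i> * c) * exp (\<i> * th x) * dotc (l j) (f x)) (at x)"
      by (rule has_vector_derivative_mult[OF e dd])
    have weq: "w j = (\<lambda>x. exp (\<i> * th x) * dotc (l j) (f x))" by (simp add: w_def fun_eq_iff)
    have e2: "dotc (l j) (B x *v f x) = mu j * dotc (l j) (f x) + dotc (l j) ((B x - Binf) *v f x)"
    proof -
      have "B x *v f x = Binf *v f x + (B x - Binf) *v f x"
        by (simp add: matrix_vector_mult_diff_rdistrib)
      then show ?thesis by (simp add: dotc_add eig)
    qed
    have eqn: "exp (\<i> * th x) * dotc (l j) (B x *v f x) + (\<i> * c) * exp (\<i> * th x) * dotc (l j) (f x)
        = (mu j + \<i> * c) * w j x + q j x"
      unfolding e2 w_def q_def by (simp add: algebra_simps)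
    show ?thesis unfolding weq using D[unfolded eqn] by (simp add: w_def)
  qed
  have qb: "cmod (q j x) \<le> P x * (\<Sum>i\<in>UNIV. cmod (w i x))" for j x
  proof -
    define E where "E = B x - Binf"
    define co where "co i = (\<Sum>a\<in>UNIV. cmod (l j $ a)) * (\<Sum>b\<in>UNIV. cmod (r i $ b)) / cmod (n i)" for i
    have coK: "co i \<le> K" for i
    proof -
      have "co i \<le> (\<Sum>i\<in>UNIV. co i)" by (rule member_le_sum) (auto simp: co_def intro!: mult_nonneg_nonneg sum_nonneg divide_nonneg_nonneg)
      also have "\<dots> \<le> K" unfolding K_def co_def
        by (rule member_le_sum[of j UNIV "\<lambda>j. \<Sum>i\<in>UNIV. (\<Sum>a\<in>UNIV. cmod (l j $ a)) * (\<Sum>b\<in>UNIV. cmod (r i $ b)) / cmod (n i)"])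
           (auto intro!: sum_nonneg mult_nonneg_nonneg divide_nonneg_nonneg)
      finally show ?thesis .
    qed
    have fx: "f x = (\<Sum>i\<in>UNIV. (dotc (l i) (f x) / n i) *s r i)" by (rule dec)
    have "q j x = exp (\<i> * th x) * dotc (l j) (E *v (\<Sum>i\<in>UNIV. (dotc (l i) (f x) / n i) *s r i))"
      unfolding q_def E_def by (subst fx[symmetric]) (rule refl)
    also have "\<dots> = (\<Sum>i\<in>UNIV. (w i x / n i) * dotc (l j) (E *v r i))"
      unfolding dotc_mv_lin sum_distrib_left by (rule sum.cong) (simp_all add: w_def)
    finally have qe: "q j x = (\<Sum>i\<in>UNIV. (w i x / n i) * dotc (l j) (E *v r i))" .
    have "cmod (q j x) \<le> (\<Sum>i\<in>UNIV. cmod ((w i x / n i) * dotc (l j) (E *v r i)))"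
      unfolding qe by (rule norm_sum)
    also have "\<dots> \<le> (\<Sum>i\<in>UNIV. cmod (w i x) * (co i * del x))"
    proof (rule sum_mono)
      fix i :: 3
      have "cmod (dotc (l j) (E *v r i)) \<le> (\<Sum>a\<in>UNIV. cmod (l j $ a)) * (\<Sum>b\<in>UNIV. cmod (r i $ b)) * del x"
        by (rule dotc_bound) (unfold E_def, rule pert)
      then have "cmod (dotc (l j) (E *v r i)) / cmod (n i) \<le> co i * del x"
        by (simp add: co_def divide_right_mono)
      moreover have "cmod ((w i x / n i) * dotc (l j) (E *v r i))
          = cmod (w i x) * (cmod (dotc (l j) (E *v r i)) / cmod (n i))"
        by (simp add: norm_mult norm_divide)
      ultimately show "cmod ((w i x / n i) * dotc (l j) (E *v r i)) \<le> cmod (w i x) * (co i * del x)"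
        by (metis mult_left_mono norm_ge_zero)
    qed
    also have "\<dots> \<le> (\<Sum>i\<in>UNIV. cmod (w i x) * P x)"
      unfolding P_def using coK dn by (intro sum_mono mult_left_mono mult_right_mono) auto
    also have "\<dots> = P x * (\<Sum>i\<in>UNIV. cmod (w i x))" by (simp add: sum_distrib_left mult.commute)
    finally show ?thesis .
  qed
  obtain b where b: "\<And>x y. b \<le> x \<Longrightarrow> x \<le> y \<Longrightarrow> integral {x..y} P \<le> 1/6"
    using tail_small[OF Pn Pc Pi, of "1/6"] by auto
  have wl: "(w j \<longlongrightarrow> 0) at_top" for j
  proof -
    have "((\<lambda>x. dotc (l j) (exp (\<i> * th x) *s f x)) \<longlongrightarrow> dotc (l j) 0) at_top"
      by (rule bounded_linear.tendsto[OF bl_dotc lim])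
    then show ?thesis by (simp add: dotc_scale dotc_zero w_def[abs_def])
  qed
  have W0: "\<forall>x\<ge>b. \<forall>j. w j x = 0"
    by (rule GL[OF wd _ qb Pn Pc b wl]) (use re in auto)
  have fb: "f b = 0"
  proof -
    have z: "dotc (l i) (f b) = 0" for i using W0 by (simp add: w_def)
    have "f b = (\<Sum>i\<in>UNIV. (dotc (l i) (f b) / n i) *s r i)" by (rule dec)
    also have "\<dots> = 0" by (simp add: z)
    finally show ?thesis .
  qed
  show ?thesis by (rule gronwall_zero[OF fd Bc fb])
qed


lemma neg_mv: "(- (A::complex^3^3)) *v v = - (A *v v)"
  by (simp add: matrix_vector_mult_def vec_eq_iff sum_negf)

lemma dotc_neg: "dotc l (- v) = - dotc l v"
  by (simp add: dotc_def sum_negf)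

lemma uniq_bot:
  fixes f :: "real \<Rightarrow> complex^3" and B :: "real \<Rightarrow> complex^3^3" and Binf :: "complex^3^3"
    and l r :: "3 \<Rightarrow> complex^3" and n mu :: "3 \<Rightarrow> complex" and th :: "real \<Rightarrow> complex" and c :: complex
    and del :: "real \<Rightarrow> real"
  assumes fd: "\<And>x. (f has_vector_derivative (B x *v f x)) (at x)"
    and thd: "\<And>x. (th has_vector_derivative c) (at x)"
    and eig: "\<And>j g. dotc (l j) (Binf *v g) = mu j * dotc (l j) g"
    and dec: "\<And>g. g = (\<Sum>i\<in>UNIV. (dotc (l i) g / n i) *s r i)"
    and pert: "\<And>x a b. cmod ((B x - Binf) $ a $ b) \<le> del x"
    and delc: "continuous_on UNIV del"
    and deli: "del absolutely_integrable_on {..a0}"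
    and Bc: "\<And>a b. continuous_on UNIV (\<lambda>x. B x $ a $ b)"
    and re: "\<And>j. Re (mu j + \<i> * c) \<le> 0"
    and lim: "((\<lambda>x. exp (\<i> * th x) *s f x) \<longlongrightarrow> 0) at_bot"
  shows "f x = 0"
proof -
  have um: "((\<lambda>x::real. -x) has_vector_derivative -1) (at x)" for x
    by (auto intro!: derivative_eq_intros)
  have fd': "((\<lambda>x. f (-x)) has_vector_derivative ((- B (-x)) *v f (-x))) (at x)" for x
    using vector_diff_chain_at[OF um fd[of "-x"]] by (simp add: o_def neg_mv)
  have thd': "((\<lambda>x. th (-x)) has_vector_derivative (- c)) (at x)" for x
    using vector_diff_chain_at[OF um thd[of "-x"]] by (simp add: o_def)
  have eig': "dotc (l j) ((- Binf) *v g) = (- mu j) * dotc (l j) g" for j g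
    by (simp add: neg_mv dotc_neg eig)
  have pert': "cmod (((- B (-x)) - (- Binf)) $ a $ b) \<le> del (-x)" for x a b
    using pert[of "-x" a b] by (simp add: norm_minus_commute)
  have delc': "continuous_on UNIV (\<lambda>x. del (-x))"
    by (rule continuous_on_compose2[OF delc]) (auto intro!: continuous_intros)
  have "(\<lambda>x. del (-x)) absolutely_integrable_on {-a0..} \<and> integral {-a0..} (\<lambda>x. del (-x)) = integral {..a0} del"
    by (rule has_absolute_integral_reflect_real[of "{-a0..}" "{..a0}" del, THEN iffD2]) (auto simp: deli)
  then have deli': "(\<lambda>x. del (-x)) integrable_on {-a0..}"
    using set_lebesgue_integral_eq_integral(1) by blast
  have Bc': "continuous_on UNIV (\<lambda>x. (- B (-x)) $ a $ b)" for a b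
  proof -
    have c1: "continuous_on UNIV (\<lambda>x. B (-x) $ a $ b)"
      by (rule continuous_on_compose2[OF Bc[of a b]]) (auto intro!: continuous_intros)
    then have "continuous_on UNIV (\<lambda>x. - (B (-x) $ a $ b))" by (rule continuous_on_minus)
    then show ?thesis by simp
  qed
  have re': "Re ((- mu j) + \<i> * (- c)) \<ge> 0" for j using re[of j] by simp
  have lim': "((\<lambda>x. exp (\<i> * th (-x)) *s f (-x)) \<longlongrightarrow> 0) at_top"
    using lim by (simp add: filterlim_at_bot_mirror)
  have "f (- (- x)) = 0"
    by (rule uniq_top[where f="\<lambda>x. f (-x)" and B="\<lambda>x. - B (-x)" and Binf="- Binf" and l=l and r=r and n=n
          and mu="\<lambda>j. - mu j" and th="\<lambda>x. th (-x)" and c="-c" and del="\<lambda>x. del (-x)",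
          OF fd' thd' eig' dec pert' delc' deli' Bc' re' lim'])
  then show ?thesis by simp
qed

definition lv :: "real \<Rightarrow> complex^2 \<Rightarrow> complex \<Rightarrow> 3 \<Rightarrow> complex^3" where
  "lv uo v z j = (if j = 1 then vector [z, \<i> * v$1, \<i> * v$2]
     else if j = 2 then vector [0, cnj (v$2), - cnj (v$1)]
     else vector [of_real (uo^2), -\<i> * z * v$1, -\<i> * z * v$2])"
definition rv :: "real \<Rightarrow> complex^2 \<Rightarrow> complex \<Rightarrow> 3 \<Rightarrow> complex^3" where
  "rv uo v z j = (if j = 1 then vector [z, -\<i> * cnj (v$1), -\<i> * cnj (v$2)]
     else if j = 2 then vector [0, v$2, - v$1]
     else vector [of_real (uo^2), \<i> * z * cnj (v$1), \<i> * z * cnj (v$2)])"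
definition nv :: "real \<Rightarrow> complex \<Rightarrow> 3 \<Rightarrow> complex" where
  "nv uo z j = (if j = 1 then z^2 + of_real (uo^2) else if j = 2 then of_real (uo^2)
      else of_real (uo^2) * (z^2 + of_real (uo^2)))"
definition muv :: "real \<Rightarrow> complex \<Rightarrow> 3 \<Rightarrow> complex" where
  "muv uo z j = (if j = 1 then \<i> * ll uo z else if j = 2 then - \<i> * kk uo z else - \<i> * ll uo z)"

lemma eig_data:
  assumes c: "cnj (v$1) * v$1 + cnj (v$2) * v$2 = of_real (uo^2)" and z: "z \<noteq> 0" and u: "uo \<noteq> 0"
  shows "dotc (lv uo v z j) ((- transpose (Xmat uo v z)) *v g) = muv uo z j * dotc (lv uo v z j) g"
proof -
  have c2: "cnj (v$1) * v$1 + cnj (v$2) * v$2 = of_real uo * of_real uo" using c by (simp add: power2_eq_square)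
  consider "j = 1" | "j = 2" | "j = 3" using exhaust_3 by blast
  then show ?thesis
  proof cases
    case 1 show ?thesis unfolding 1
      apply (simp add: lv_def muv_def dotc_def sum_3 matrix_vector_mult_def transpose_def Xmat_entries kk_def ll_def)
      apply (simp add: field_simps z u)
      apply (use c2 in algebra)?
      done
  next
    case 2 show ?thesis unfolding 2
      apply (simp add: lv_def muv_def dotc_def sum_3 matrix_vector_mult_def transpose_def Xmat_entries kk_def ll_def)
      apply (simp add: field_simps z u)
      apply (use c2 in algebra)?
      done
  next
    case 3 show ?thesis unfolding 3
      apply (simp add: lv_def muv_def dotc_def sum_3 matrix_vector_mult_def transpose_def Xmat_entries kk_def ll_def)
      apply (simp add: field_simps z u)
      apply (use c2 in algebra)?
      done
  qed
qed
lemma dec_data: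
  assumes c: "cnj (v$1) * v$1 + cnj (v$2) * v$2 = of_real (uo^2)" and u: "uo \<noteq> 0"
    and zz: "z^2 + of_real (uo^2) \<noteq> 0"
  shows "g = (\<Sum>i\<in>UNIV. (dotc (lv uo v z i) g / nv uo z i) *s rv uo v z i)"
proof -
  have c2: "cnj (v$1) * v$1 + cnj (v$2) * v$2 = of_real uo * of_real uo" using c by (simp add: power2_eq_square)
  have zz': "z^2 + (of_real uo)^2 \<noteq> 0" using zz by simp
  have ha: "inverse (z^2 + (of_real uo)^2) * (z^2 + (of_real uo)^2) = 1" using zz' by simp
  have hi: "\<i> * \<i> = (-1::complex)" by simp
  have hb: "inverse ((of_real uo)^2) * (of_real uo)^2 = (1::complex)" using u by simp
  show ?thesis
    unfolding vec_eq_iff forall_3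
    apply (simp add: sum_3 lv_def rv_def nv_def dotc_def divide_inverse inverse_mult_distrib)
    apply (intro conjI)
      apply (use c2 ha hb hi in algebra)+
    done
qed
lemma Xi1_facts:
  assumes "z \<in> Xi1 uo" "uo > 0"
  shows "z \<noteq> 0" "z^2 + of_real (uo^2) \<noteq> 0" "Im z > 0" "cmod z > uo"
proof -
  show iz: "Im z > 0" and cz: "cmod z > uo" using assms by (auto simp: Xi1_def)
  then show "z \<noteq> 0" by auto
  show "z^2 + of_real (uo^2) \<noteq> 0"
  proof
    assume "z^2 + of_real (uo^2) = 0"
    then have "z^2 = - of_real (uo^2)" by (simp add: add_eq_0_iff)
    then have "cmod (z^2) = uo^2" using assms(2) by (simp add: norm_power)
    then have "cmod z ^ 2 = uo ^ 2" by (simp add: norm_power)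
    then have "cmod z = uo" using assms(2) by (simp add: power2_eq_iff_nonneg)
    then show False using cz by simp
  qed
qed

lemma Im_ll_nonneg:
  assumes "Im z \<ge> 0" "cmod z \<ge> uo" "uo > 0"
  shows "Im (ll uo z) \<ge> 0"
proof -
  have z0: "cmod z > 0" using assms(2,3) by linarith
  have "Im (ll uo z) = (Im z - uo^2 * Im z / (cmod z)^2) / 2"
    by (simp add: ll_def Im_divide')
  also have "\<dots> = Im z * ((cmod z)^2 - uo^2) / (2 * (cmod z)^2)"
    using z0 by (simp add: field_simps)
  also have "\<dots> \<ge> 0"
  proof -
    have "uo^2 \<le> (cmod z)^2" using assms by (intro power_mono) auto
    then show ?thesis using assms by (intro divide_nonneg_pos mult_nonneg_nonneg) (auto simp: z0)
  qed
  finally show ?thesis .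
qed

lemma Im_inv_nonpos:
  assumes "Im z \<ge> 0"
  shows "Im (of_real (uo^2) / z) \<le> 0"
  using assms by (simp add: Im_divide' divide_nonpos_nonneg)

lemma re_top:
  assumes "z \<in> Xi1 uo" "uo > 0"
  shows "Re (muv uo z j + \<i> * (- ll uo z)) \<ge> 0"
proof -
  have iz: "Im z > 0" and cz: "cmod z > uo" using Xi1_facts[OF assms] by auto
  have l: "Im (ll uo z) \<ge> 0" using Im_ll_nonneg[of z uo] iz cz assms(2) by simp
  have kl: "kk uo z + ll uo z = z" by (simp add: kk_def ll_def field_simps)
  consider "j = 1" | "j = 2" | "j = 3" using exhaust_3 by blast
  then show ?thesis
  proof cases
    case 1 then show ?thesis by (simp add: muv_def)
  next
    case 2
    have "muv uo z j + \<i> * (- ll uo z) = - \<i> * (kk uo z + ll uo z)" using 2 by (simp add: muv_def algebra_simps)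
    then show ?thesis using iz kl by simp
  next
    case 3 then show ?thesis using l by (simp add: muv_def)
  qed
qed

lemma re_bot:
  assumes "z \<in> Xi1 uo" "uo > 0"
  shows "Re (muv uo z j + \<i> * kk uo z) \<le> 0"
proof -
  have iz: "Im z > 0" using Xi1_facts[OF assms] by auto
  have kl: "kk uo z + ll uo z = z" by (simp add: kk_def ll_def field_simps)
  have kl2: "ll uo z - kk uo z = of_real (uo^2) / z" by (simp add: kk_def ll_def field_simps)
  have i2: "Im (of_real (uo^2) / z) \<le> 0" using Im_inv_nonpos[of z uo] iz by simp
  consider "j = 1" | "j = 2" | "j = 3" using exhaust_3 by blast
  then show ?thesis
  proof cases
    case 1
    have "muv uo z j + \<i> * kk uo z = \<i> * (kk uo z + ll uo z)" using 1 by (simp add: muv_def algebra_simps)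
    then show ?thesis using iz kl by simp
  next
    case 2 then show ?thesis by (simp add: muv_def)
  next
    case 3
    define w where "w = ll uo z - kk uo z"
    have e: "muv uo z j + \<i> * kk uo z = - \<i> * w" using 3 by (simp add: muv_def w_def algebra_simps)
    have "Im w \<le> 0" using i2 kl2 by (simp add: w_def)
    then show ?thesis unfolding e by simp
  qed
qed

lemma pert_X:
  "cmod (((- transpose (Xmat uo a z)) - (- transpose (Xmat uo b z))) $ i $ j) \<le> norm (a - b)"
proof -
  have n1: "cmod (a$1 - b$1) \<le> norm (a - b)" using Finite_Cartesian_Product.norm_nth_le[of "a - b" 1] by simp
  have n2: "cmod (a$2 - b$2) \<le> norm (a - b)" using Finite_Cartesian_Product.norm_nth_le[of "a - b" 2] by simp
  have n1': "cmod (b$1 - a$1) \<le> norm (a - b)" using n1 by (simp add: norm_minus_commute)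
  have n2': "cmod (b$2 - a$2) \<le> norm (a - b)" using n2 by (simp add: norm_minus_commute)
  have c1: "cmod (cnj (a$1) - cnj (b$1)) \<le> norm (a - b)" using n1 by (metis complex_cnj_diff complex_mod_cnj)
  have c2: "cmod (cnj (a$2) - cnj (b$2)) \<le> norm (a - b)" using n2 by (metis complex_cnj_diff complex_mod_cnj)
  have c1': "cmod (cnj (b$1) - cnj (a$1)) \<le> norm (a - b)" using c1 by (simp add: norm_minus_commute)
  have c2': "cmod (cnj (b$2) - cnj (a$2)) \<le> norm (a - b)" using c2 by (simp add: norm_minus_commute)
  have "i = 1 \<or> i = 2 \<or> i = 3" "j = 1 \<or> j = 2 \<or> j = 3" using exhaust_3 by auto
  then show ?thesis
    by (auto simp: transpose_def Xmat_entries n1 n2 n1' n2' c1 c2 c1' c2')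
qed

lemma cont_X:
  assumes "continuous_on UNIV v"
  shows "continuous_on UNIV (\<lambda>x. (- transpose (Xmat uo (v x) z)) $ i $ j)"
proof -
  have "i = 1 \<or> i = 2 \<or> i = 3" "j = 1 \<or> j = 2 \<or> j = 3" using exhaust_3 by auto
  then show ?thesis
    apply (elim disjE)
    apply (simp_all add: transpose_def Xmat_entries)
    apply (intro continuous_intros assms)+
    done
qed

lemma norm_constraint:
  assumes "norm (v::complex^2) = uo"
  shows "cnj (v$1) * v$1 + cnj (v$2) * v$2 = of_real (uo^2)"
proof -
  have "uo^2 = (norm v)^2" using assms by simp
  also have "\<dots> = (cmod (v$1))^2 + (cmod (v$2))^2"
    unfolding norm_vec_def L2_set_def by (simp add: sum_2)
  finally have h: "uo^2 = (cmod (v$1))^2 + (cmod (v$2))^2" .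
  have e1: "cnj (v$1) * v$1 = of_real ((cmod (v$1))^2)" by (simp only: complex_norm_square mult.commute)
  have e2: "cnj (v$2) * v$2 = of_real ((cmod (v$2))^2)" by (simp only: complex_norm_square mult.commute)
  show ?thesis unfolding e1 e2 h by (simp only: of_real_add)
qed

lemma ph1_deriv: "((\<lambda>x. ph1 a1 a2 uo x t z) has_vector_derivative (- ll uo z)) (at x)"
  unfolding ph1_def by (auto intro!: derivative_eq_intros)
lemma ph2_deriv: "((\<lambda>x. ph2 a1 a2 uo x t z) has_vector_derivative (kk uo z)) (at x)"
  unfolding ph2_def by (auto intro!: derivative_eq_intros)

lemma U1:
  fixes v vx :: "real \<Rightarrow> complex^2" and up :: "complex^2" and f :: "real \<Rightarrow> complex^3"
  assumes uo: "uo > 0" and nup: "norm up = uo" and z: "z \<in> Xi1 uo"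
    and vd: "\<And>x. (v has_vector_derivative vx x) (at x)"
    and L1: "(\<lambda>x. v x - up) absolutely_integrable_on {a0..}"
    and fd: "\<And>x. (f has_vector_derivative (- transpose (Xmat uo (v x) z) *v f x)) (at x)"
    and lim: "((\<lambda>x. exp (\<i> * ph1 a1 a2 uo x t z) *s f x) \<longlongrightarrow> 0) at_top"
  shows "f x = 0"
proof -
  have vc: "continuous_on UNIV v" by (rule continuous_on_vector_derivative) (use vd in blast)
  have zf: "z \<noteq> 0" "z^2 + of_real (uo^2) \<noteq> 0" using Xi1_facts[OF z uo] by auto
  have di: "(\<lambda>x. norm (v x - up)) integrable_on {a0..}"
    using absolutely_integrable_on_def[THEN iffD1, OF L1] by (rule conjunct2)
  show ?thesis
    apply (rule uniq_top[where B = "\<lambda>x. - transpose (Xmat uo (v x) z)" and Binf = "- transpose (Xmat uo up z)"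
          and l = "lv uo up z" and r = "rv uo up z" and n = "nv uo z" and mu = "muv uo z"
          and th = "\<lambda>x. ph1 a1 a2 uo x t z" and c = "- ll uo z" and del = "\<lambda>x. norm (v x - up)",
          OF fd ph1_deriv eig_data[OF norm_constraint[OF nup] zf(1)] dec_data[OF norm_constraint[OF nup] _ zf(2)]
             pert_X _ di cont_X[OF vc] re_top[OF z uo] lim])
    using uo apply simp_all
    apply (intro continuous_intros vc)
    done
qed

lemma U2:
  fixes v vx :: "real \<Rightarrow> complex^2" and um :: "complex^2" and f :: "real \<Rightarrow> complex^3"
  assumes uo: "uo > 0" and num: "norm um = uo" and z: "z \<in> Xi1 uo"
    and vd: "\<And>x. (v has_vector_derivative vx x) (at x)"
    and L1: "(\<lambda>x. v x - um) absolutely_integrable_on {..a0}"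
    and fd: "\<And>x. (f has_vector_derivative (- transpose (Xmat uo (v x) z) *v f x)) (at x)"
    and lim: "((\<lambda>x. exp (\<i> * ph2 a1 a2 uo x t z) *s f x) \<longlongrightarrow> 0) at_bot"
  shows "f x = 0"
proof -
  have vc: "continuous_on UNIV v" by (rule continuous_on_vector_derivative) (use vd in blast)
  have zf: "z \<noteq> 0" "z^2 + of_real (uo^2) \<noteq> 0" using Xi1_facts[OF z uo] by auto
  have di: "(\<lambda>x. norm (v x - um)) absolutely_integrable_on {..a0}"
  proof -
    have "(\<lambda>x. norm (v x - um)) integrable_on {..a0}"
      using absolutely_integrable_on_def[THEN iffD1, OF L1] by (rule conjunct2)
    then show ?thesis by (rule nonnegative_absolutely_integrable_1) simp
  qed
  show ?thesis
    apply (rule uniq_bot[where B = "\<lambda>x. - transpose (Xmat uo (v x) z)" and Binf = "- transpose (Xmat uo um z)"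
          and l = "lv uo um z" and r = "rv uo um z" and n = "nv uo z" and mu = "muv uo z"
          and th = "\<lambda>x. ph2 a1 a2 uo x t z" and c = "kk uo z" and del = "\<lambda>x. norm (v x - um)",
          OF fd ph2_deriv eig_data[OF norm_constraint[OF num] zf(1)] dec_data[OF norm_constraint[OF num] _ zf(2)]
             pert_X _ di cont_X[OF vc] re_bot[OF z uo] lim])
    using uo apply simp_all
    apply (intro continuous_intros vc)
    done
qed

lemma vcnj_scale: "vcnj (c *s p) = cnj c *s vcnj p"
  by (simp add: vcnj_def vec_eq_iff)
lemma vcnj_vcnj: "vcnj (vcnj p) = p"
  by (simp add: vcnj_def vec_eq_iff)
lemma vcnj_zero_iff: "vcnj p = 0 \<longleftrightarrow> p = 0"
  by (auto simp: vcnj_def vec_eq_iff)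
lemma vcnj_diff: "vcnj (a - b) = vcnj a - vcnj b"
  by (simp add: vcnj_def vec_eq_iff)
lemma smult_diff: "(c::complex) *s (a - b) = c *s a - c *s (b::complex^3)"
  by (simp add: vec_eq_iff algebra_simps)
lemma cross_vcnj: "cross3c (vcnj a) (vcnj b) = vcnj (cross3c a b)"
  by (simp add: cross3c_def vcnj_def vec_eq_iff forall_3)
lemma cross_smult_right: "cross3c a (c *s b) = c *s cross3c a b"
  by (simp add: cross3c_def vec_eq_iff forall_3 algebra_simps)
lemma cross_smult_left: "cross3c (c *s a) b = c *s cross3c a b"
  by (simp add: cross3c_def vec_eq_iff forall_3 algebra_simps)
lemma cross_anti: "cross3c a b = (-1) *s cross3c b a"
  by (simp add: cross3c_def vec_eq_iff forall_3 algebra_simps)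
lemma smult_eq_0: "(c::complex) \<noteq> 0 \<Longrightarrow> (c *s (v::complex^3) = 0) = (v = 0)"
  by (auto simp: vec_eq_iff)
lemma smult_smult: "(a::complex) *s (b *s (v::complex^3)) = (a * b) *s v"
  by (simp add: vec_eq_iff)

lemma norm_smult_unit:
  assumes "cmod c = 1"
  shows "norm (c *s (v::complex^2)) = norm v"
  unfolding norm_vec_def using assms by (simp add: norm_mult)

lemma col_G1:
  assumes "z \<noteq> 0" "uo \<noteq> 0"
  shows "col3 3 (Gtmat uo v (- of_real (uo^2) / z)) = (- \<i> * z / of_real uo) *s col3 1 (Gtmat uo v z)"
  using assms by (simp add: col3_def Gtmat_def Gmat_def vec_eq_iff forall_3 field_simps power2_eq_square)

lemma col_G2: "col3 2 (Gtmat uo v a) = col3 2 (Gtmat uo v b)"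
  by (simp add: col3_def Gtmat_def Gmat_def vec_eq_iff forall_3)

lemma Gt_cnj: "vcnj (col3 l (Gmat uo w (cnj z))) = col3 l (Gtmat uo w z)"
  by (simp add: col3_def Gtmat_def vcnj_def vec_eq_iff)

lemma col_G1_nz: "col3 1 (Gmat uo w z) \<noteq> 0"
proof
  assume "col3 1 (Gmat uo w z) = 0"
  then have "col3 1 (Gmat uo w z) $ 1 = 0" by simp
  then show False by (simp add: col3_def Gmat_def)
qed

lemma col_G2_nz:
  assumes "w \<noteq> 0" "uo \<noteq> 0"
  shows "col3 2 (Gmat uo w z) \<noteq> 0"
proof
  assume h: "col3 2 (Gmat uo w z) = 0"
  have "col3 2 (Gmat uo w z) $ 2 = 0" "col3 2 (Gmat uo w z) $ 3 = 0" using h by simp_all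
  then have "w $ 1 = 0" "w $ 2 = 0" using assms(2) by (simp_all add: col3_def Gmat_def vperp_def)
  then have "w = 0" by (simp add: vec_eq_iff forall_2)
  then show False using assms(1) by simp
qed

lemma nz_from_lim:
  assumes "((\<lambda>x. e x *s f x) \<longlongrightarrow> L) F" "F \<noteq> bot" "L \<noteq> (0::complex^3)"
  shows "\<exists>x. f x \<noteq> 0"
proof (rule ccontr)
  assume "\<not> ?thesis"
  then have "(\<lambda>x. e x *s f x) = (\<lambda>x. 0)" by (auto simp: vec_eq_iff)
  then have "((\<lambda>x. 0) \<longlongrightarrow> L) F" using assms(1) by simp
  then have "L = 0" using tendsto_unique[OF assms(2) _ tendsto_const] by blast
  then show False using assms(3) by simp
qed

lemma conj_jost:
  assumes J: "jost_col a1 a2 uo u ux uxx w F l R phi" and zR: "cnj z \<in> R"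
  shows "((\<lambda>y. vcnj (phi y t (cnj z))) has_vector_derivative
            (- transpose (Xmat uo (u x t) z) *v vcnj (phi x t (cnj z)))) (at x)"
    and "((\<lambda>x. exp (\<i> * phase a1 a2 uo l x t z) *s vcnj (phi x t (cnj z))) \<longlongrightarrow> col3 l (Gtmat uo w z)) F"
proof -
  have L: "lax_sol a1 a2 uo u ux uxx (cnj z) (\<lambda>x t. phi x t (cnj z))"
    and T: "((\<lambda>x. exp (- \<i> * phase a1 a2 uo l x t (cnj z)) *s phi x t (cnj z)) \<longlongrightarrow> col3 l (Gmat uo w (cnj z))) F"
    using J zR unfolding jost_col_def by auto
  have d: "((\<lambda>y. phi y t (cnj z)) has_vector_derivative (Xmat uo (u x t) (cnj z) *v phi x t (cnj z))) (at x)"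
    using L unfolding lax_sol_def by blast
  show "((\<lambda>y. vcnj (phi y t (cnj z))) has_vector_derivative
            (- transpose (Xmat uo (u x t) z) *v vcnj (phi x t (cnj z)))) (at x)"
    using bounded_linear.has_vector_derivative[OF bl_vcnj d] by (simp add: Xmat_cnj)
  have "((\<lambda>x. vcnj (exp (- \<i> * phase a1 a2 uo l x t (cnj z)) *s phi x t (cnj z))) \<longlongrightarrow> vcnj (col3 l (Gmat uo w (cnj z)))) F"
    by (rule bounded_linear.tendsto[OF bl_vcnj T])
  moreover have "vcnj (exp (- \<i> * phase a1 a2 uo l x t (cnj z)) *s phi x t (cnj z))
      = exp (\<i> * phase a1 a2 uo l x t z) *s vcnj (phi x t (cnj z))" for x
    by (simp add: vcnj_scale exp_cnj phase_cnj)
  ultimately show "((\<lambda>x. exp (\<i> * phase a1 a2 uo l x t z) *s vcnj (phi x t (cnj z))) \<longlongrightarrow> col3 l (Gtmat uo w z)) F"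
    by (simp add: Gt_cnj)
qed

lemma adj_jost:
  assumes J: "adj_jost_col a1 a2 uo u ux uxx w F l R psi" and zR: "z \<in> R"
  shows "((\<lambda>y. psi y t z) has_vector_derivative (- transpose (Xmat uo (u x t) z) *v psi x t z)) (at x)"
    and "((\<lambda>x. exp (\<i> * phase a1 a2 uo l x t z) *s psi x t z) \<longlongrightarrow> col3 l (Gtmat uo w z)) F"
  using J zR unfolding adj_jost_col_def adj_lax_sol_def by auto

lemma jost_d:
  assumes J: "jost_col a1 a2 uo u ux uxx w F l R phi" and zR: "z \<in> R"
  shows "((\<lambda>y. phi y t z) has_vector_derivative (Xmat uo (u x t) z *v phi x t z)) (at x)"
    and "((\<lambda>s. phi x s z) has_vector_derivative (Tmat a1 a2 uo (u x t) (ux x t) (uxx x t) z *v phi x t z)) (at t)"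
    and "((\<lambda>x. exp (- \<i> * phase a1 a2 uo l x t z) *s phi x t z) \<longlongrightarrow> col3 l (Gmat uo w z)) F"
  using J zR unfolding jost_col_def lax_sol_def by auto

lemma cross_par:
  assumes "a \<noteq> 0" "cross3c a b = 0"
  shows "\<exists>c. b = c *s a"
proof -
  have e: "a$2 * b$3 = a$3 * b$2" "a$3 * b$1 = a$1 * b$3" "a$1 * b$2 = a$2 * b$1"
    using assms(2) by (simp_all add: cross3c_def vec_eq_iff forall_3)
  have "a$1 \<noteq> 0 \<or> a$2 \<noteq> 0 \<or> a$3 \<noteq> 0" using assms(1) by (auto simp: vec_eq_iff forall_3)
  then show ?thesis
  proof (elim disjE)
    assume h: "a$1 \<noteq> 0"
    show ?thesis
      by (rule exI[of _ "b$1 / a$1"]) (use h e in \<open>auto simp: vec_eq_iff forall_3 field_simps\<close>)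
  next
    assume h: "a$2 \<noteq> 0"
    show ?thesis
      by (rule exI[of _ "b$2 / a$2"]) (use h e in \<open>auto simp: vec_eq_iff forall_3 field_simps\<close>)
  next
    assume h: "a$3 \<noteq> 0"
    show ?thesis
      by (rule exI[of _ "b$3 / a$3"]) (use h e in \<open>auto simp: vec_eq_iff forall_3 field_simps\<close>)
  qed
qed

lemma cross_scale_self: "cross3c a (c *s a) = 0"
  by (simp add: cross3c_def vec_eq_iff forall_3 algebra_simps)

lemma lin_smult: "linear (\<lambda>v::complex^3. c *s v)"
  by (rule linearI) (simp_all add: vec_eq_iff algebra_simps)
lemma bl_smult: "bounded_linear (\<lambda>v::complex^3. c *s v)"
  using lin_smult linear_conv_bounded_linear by blast

lemma PAR:
  fixes P M :: "real \<Rightarrow> real \<Rightarrow> complex^3" and A T :: "real \<Rightarrow> real \<Rightarrow> complex^3^3"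
  assumes Pd: "\<And>x t. ((\<lambda>y. P y t) has_vector_derivative A x t *v P x t) (at x)"
    and Md: "\<And>x t. ((\<lambda>y. M y t) has_vector_derivative A x t *v M x t) (at x)"
    and Pt: "\<And>x t. ((\<lambda>s. P x s) has_vector_derivative T x t *v P x t) (at t)"
    and Mt: "\<And>x t. ((\<lambda>s. M x s) has_vector_derivative T x t *v M x t) (at t)"
    and Ac: "\<And>t i j. continuous_on UNIV (\<lambda>x. A x t $ i $ j)"
    and Pnz: "\<And>t. \<exists>x. P x t \<noteq> 0"
    and cr: "\<And>x t. cross3c (P x t) (M x t) = 0"
  shows "\<exists>c. \<forall>x t. M x t = c *s P x t"
proof -
  have Pnz': "P x t \<noteq> 0" for x t
  proof
    assume "P x t = 0"
    then have "P y t = 0" for y by (rule gronwall_zero[OF Pd Ac])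
    then show False using Pnz[of t] by auto
  qed
  have ex: "\<exists>c. \<forall>x. M x t = c *s P x t" for t
  proof -
    obtain c where c: "M 0 t = c *s P 0 t" using cross_par[OF Pnz' cr] by blast
    have gd: "((\<lambda>y. M y t - c *s P y t) has_vector_derivative A x t *v (M x t - c *s P x t)) (at x)" for x
    proof -
      have "((\<lambda>y. M y t - c *s P y t) has_vector_derivative A x t *v M x t - c *s (A x t *v P x t)) (at x)"
        by (intro has_vector_derivative_diff Md bounded_linear.has_vector_derivative[OF bl_smult Pd])
      moreover have "A x t *v (M x t - c *s P x t) = A x t *v M x t - c *s (A x t *v P x t)"
        by (simp add: vec_eq_iff matrix_vector_mult_def sum_distrib_left sum_subtractf algebra_simps)
      ultimately show ?thesis by simp
    qed
    have "M y t - c *s P y t = 0" for y by (rule gronwall_zero[OF gd Ac, of 0]) (simp add: c)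
    then show ?thesis by auto
  qed
  define C where "C t = (SOME c. \<forall>x. M x t = c *s P x t)" for t
  have C: "M x t = C t *s P x t" for x t
    unfolding C_def by (rule someI_ex[OF ex[of t], THEN spec])
  have Cd: "(C has_vector_derivative 0) (at t0)" for t0
  proof -
    obtain j where j: "P 0 t0 $ j \<noteq> 0" using Pnz'[of 0 t0] by (auto simp: vec_eq_iff)
    define p where "p s = P 0 s $ j" for s
    define m where "m s = M 0 s $ j" for s
    have pd: "(p has_vector_derivative (T 0 s *v P 0 s) $ j) (at s)" for s
      unfolding p_def using bounded_linear.has_vector_derivative[OF bounded_linear_vec_nth Pt] .
    have md: "(m has_vector_derivative (T 0 s *v M 0 s) $ j) (at s)" for s
      unfolding m_def using bounded_linear.has_vector_derivative[OF bounded_linear_vec_nth Mt] .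
    have pc: "continuous_on UNIV p"
      by (rule continuous_on_vector_derivative) (use pd in blast)
    define S where "S = {s. p s \<noteq> 0}"
    have So: "open S" unfolding S_def by (rule open_Collect_neq[OF pc continuous_on_const])
    have t0S: "t0 \<in> S" using j by (simp add: S_def p_def)
    have CS: "C s = m s * inverse (p s)" if "s \<in> S" for s
      using that C[of 0 s] by (simp add: S_def m_def p_def field_simps)
    have inv: "((\<lambda>s. inverse (p s)) has_vector_derivative
                 (T 0 t0 *v P 0 t0) $ j * (- (inverse (p t0) ^ Suc (Suc 0)))) (at t0)"
      using field_vector_diff_chain_at[OF pd DERIV_inverse[of "p t0" UNIV]] t0S
      by (simp add: o_def S_def)
    have q: "((\<lambda>s. m s * inverse (p s)) has_vector_derivative
               m t0 * ((T 0 t0 *v P 0 t0) $ j * (- (inverse (p t0) ^ Suc (Suc 0))))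
               + (T 0 t0 *v M 0 t0) $ j * inverse (p t0)) (at t0)"
      by (rule has_vector_derivative_mult[OF md inv])
    have zero: "m t0 * ((T 0 t0 *v P 0 t0) $ j * (- (inverse (p t0) ^ Suc (Suc 0))))
               + (T 0 t0 *v M 0 t0) $ j * inverse (p t0) = 0"
    proof -
      have "M 0 t0 = C t0 *s P 0 t0" by (rule C)
      then have m0: "m t0 = C t0 * p t0" and tm: "(T 0 t0 *v M 0 t0) $ j = C t0 * (T 0 t0 *v P 0 t0) $ j"
        by (simp_all add: m_def p_def matrix_vector_mult_def sum_distrib_left algebra_simps)
      show ?thesis using t0S unfolding m0 tm by (simp add: S_def field_simps power2_eq_square)
    qed
    have "(C has_vector_derivative (m t0 * ((T 0 t0 *v P 0 t0) $ j * (- (inverse (p t0) ^ Suc (Suc 0))))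
               + (T 0 t0 *v M 0 t0) $ j * inverse (p t0))) (at t0)"
      by (rule has_vector_derivative_transform_within_open[OF q So t0S]) (simp add: CS)
    then show ?thesis unfolding zero .
  qed
  have "\<exists>c. \<forall>t\<in>UNIV. C t = c"
    by (rule has_derivative_zero_constant[of UNIV C]) (use Cd in \<open>auto simp: has_vector_derivative_def\<close>)
  then obtain c where "\<And>t. C t = c" by auto
  then show ?thesis using C by auto
qed

lemma cont_Xp:
  assumes "continuous_on UNIV v"
  shows "continuous_on UNIV (\<lambda>x. Xmat uo (v x) z $ i $ j)"
proof -
  have "i = 1 \<or> i = 2 \<or> i = 3" "j = 1 \<or> j = 2 \<or> j = 3" using exhaust_3 by auto
  then show ?thesis
    apply (elim disjE)
    apply (simp_all add: Xmat_entries)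
    apply (intro continuous_intros assms)+
    done
qed

lemma phase_simps:
  "phase a1 a2 uo 1 x t z = ph1 a1 a2 uo x t z"
  "phase a1 a2 uo 2 x t z = ph2 a1 a2 uo x t z"
  "phase a1 a2 uo 3 x t z = - ph1 a1 a2 uo x t z"
  by (simp_all add: phase_def)

theorem proposition7:
  fixes a1 a2 uo hp hm :: real
    and uvec :: "complex^2"
    and u ux uxx uxxx ut :: "real \<Rightarrow> real \<Rightarrow> complex^2"
    and phiM2 phiP1 phiP3 psiP1 psiM2 psiP3 :: "real \<Rightarrow> real \<Rightarrow> complex \<Rightarrow> complex^3"
    and zo :: complex
  defines "up \<equiv> exp (\<i> * of_real hp) *s uvec"
      and "um \<equiv> exp (\<i> * of_real hm) *s uvec"
  assumes uo_pos: "uo > 0"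
    and uvec_norm: "norm uvec = uo"
    and pde: "is_solution a1 a2 uo u ux uxx uxxx ut"
    and bc_minus: "\<forall>t. ((\<lambda>x. u x t) \<longlongrightarrow> um) at_bot"
    and bc_plus: "\<forall>t. ((\<lambda>x. u x t) \<longlongrightarrow> up) at_top"
    and L1_minus: "\<forall>t a. (\<lambda>x. u x t - um) absolutely_integrable_on {..a}"
    and L1_plus: "\<forall>t a. (\<lambda>x. u x t - up) absolutely_integrable_on {a..}"
    and J_M2: "jost_col a1 a2 uo u ux uxx um at_bot 2 {z. Im z < 0} phiM2"
    and J_P1: "jost_col a1 a2 uo u ux uxx up at_top 1 (Xi2 uo) phiP1"
    and J_P3: "jost_col a1 a2 uo u ux uxx up at_top 3 (Xi3 uo) phiP3"
    and A_P1: "adj_jost_col a1 a2 uo u ux uxx up at_top 1 (Xi1 uo) psiP1"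
    and A_M2: "adj_jost_col a1 a2 uo u ux uxx um at_bot 2 {z. Im z > 0} psiM2"
    and A_P3: "adj_jost_col a1 a2 uo u ux uxx up at_top 3 (Xi4 uo) psiP3"
    and zo_in: "zo \<in> Xi1 uo"
  defines "rho1 \<equiv> (\<lambda>x t z. exp (\<i> * ph2 a1 a2 uo x t z) *s cross3c (psiP1 x t z) (psiM2 x t z))"
      and "rho4 \<equiv> (\<lambda>x t z. exp (\<i> * ph2 a1 a2 uo x t z) *s cross3c (psiM2 x t z) (psiP3 x t z))"
  shows
    "((\<forall>x t. rho1 x t zo = 0) \<longleftrightarrow> (\<forall>x t. rho4 x t (- of_real (uo^2) / zo) = 0))
   \<and> ((\<forall>x t. rho1 x t zo = 0) \<longleftrightarrow>
        (\<exists>c. c \<noteq> 0 \<and> (\<forall>x t. phiM2 x t (cnj zo) = c *s phiP1 x t (cnj zo))))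
   \<and> ((\<forall>x t. rho1 x t zo = 0) \<longleftrightarrow>
        (\<exists>c. c \<noteq> 0 \<and> (\<forall>x t. phiM2 x t (- of_real (uo^2) / cnj zo)
                              = c *s phiP3 x t (- of_real (uo^2) / cnj zo))))"
proof -
  have uo0: "uo \<noteq> 0" using uo_pos by simp
  have zf: "zo \<noteq> 0" "Im zo > 0" "cmod zo > uo" using Xi1_facts[OF zo_in uo_pos] by auto
  define w where "w = - of_real (uo^2) / zo"
  define wc where "wc = - of_real (uo^2) / cnj zo"
  have cw: "cnj w = wc" by (simp add: w_def wc_def)
  have czR: "cnj zo \<in> Xi2 uo" using zf by (simp add: Xi2_def)
  have czIm: "cnj zo \<in> {z. Im z < 0}" using zf by simp
  have zoIm: "zo \<in> {z. Im z > 0}" using zf by simp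
  have cmw: "cmod w < uo"
  proof -
    have "cmod w = uo^2 / cmod zo" using uo_pos by (simp add: w_def norm_divide norm_power)
    also have "\<dots> < uo" using zf(3) uo_pos by (simp add: power2_eq_square divide_less_eq)
    finally show ?thesis .
  qed
  have imw: "Im w > 0"
  proof -
    have "Im w = uo^2 * Im zo / (cmod zo)^2" by (simp add: w_def Im_divide')
    then show ?thesis using zf uo_pos by simp
  qed
  have wR: "w \<in> Xi4 uo" using cmw imw by (simp add: Xi4_def)
  have cwR: "cnj w \<in> Xi3 uo" using cmw imw by (simp add: Xi3_def)
  have wIm: "w \<in> {z. Im z > 0}" using imw by simp
  have cwIm: "cnj w \<in> {z. Im z < 0}" using imw by simp
  have nup: "norm up = uo" unfolding up_def using uvec_norm by (simp add: norm_smult_unit)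
  have num: "norm um = uo" unfolding um_def using uvec_norm by (simp add: norm_smult_unit)
  have ud: "\<And>x t. ((\<lambda>y. u y t) has_vector_derivative ux x t) (at x)"
    using pde by (simp add: is_solution_def)
  have L1p: "\<And>t. (\<lambda>x. u x t - up) absolutely_integrable_on {0..}" using L1_plus by blast
  have L1m: "\<And>t. (\<lambda>x. u x t - um) absolutely_integrable_on {..0}" using L1_minus by blast
  have Xw: "\<And>v. Xmat uo v w = Xmat uo v zo" unfolding w_def by (rule Xmat_inv[OF zf(1) uo0])
  have ph1w: "\<And>x t. ph1 a1 a2 uo x t w = - ph1 a1 a2 uo x t zo" unfolding w_def by (rule ph1_inv[OF zf(1) uo0])
  have ph2w: "\<And>x t. ph2 a1 a2 uo x t w = ph2 a1 a2 uo x t zo" unfolding w_def by (rule ph2_inv[OF zf(1) uo0])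
  define \<alpha> where "\<alpha> = - \<i> * zo / of_real uo"
  have a0: "\<alpha> \<noteq> 0" using zf uo0 by (simp add: \<alpha>_def)
  have G1: "col3 3 (Gtmat uo up w) = \<alpha> *s col3 1 (Gtmat uo up zo)"
    unfolding w_def \<alpha>_def by (rule col_G1[OF zf(1) uo0])
  have bl: "bounded_linear (\<lambda>v::complex^3. c *s v)" for c by (rule bl_smult)
  have S1: "psiP1 x t zo = vcnj (phiP1 x t (cnj zo))" for x t
  proof -
    define f where "f = (\<lambda>y. psiP1 y t zo - vcnj (phiP1 y t (cnj zo)))"
    have fd: "(f has_vector_derivative (- transpose (Xmat uo (u y t) zo) *v f y)) (at y)" for y
      using has_vector_derivative_diff[OF adj_jost(1)[OF A_P1 zo_in] conj_jost(1)[OF J_P1 czR]]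
      by (simp add: f_def matrix_vector_mult_diff_distrib)
    have "((\<lambda>y. exp (\<i> * ph1 a1 a2 uo y t zo) *s psiP1 y t zo - exp (\<i> * ph1 a1 a2 uo y t zo) *s vcnj (phiP1 y t (cnj zo)))
           \<longlongrightarrow> col3 1 (Gtmat uo up zo) - col3 1 (Gtmat uo up zo)) at_top"
      using tendsto_diff[OF adj_jost(2)[OF A_P1 zo_in] conj_jost(2)[OF J_P1 czR]] by (simp add: phase_simps)
    then have lim: "((\<lambda>y. exp (\<i> * ph1 a1 a2 uo y t zo) *s f y) \<longlongrightarrow> 0) at_top"
      by (simp add: f_def smult_diff)
    have "f x = 0" by (rule U1[OF uo_pos nup zo_in ud L1p fd lim])
    then show ?thesis by (simp add: f_def)
  qed
  have S2: "psiM2 x t zo = vcnj (phiM2 x t (cnj zo))" for x t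
  proof -
    define f where "f = (\<lambda>y. psiM2 y t zo - vcnj (phiM2 y t (cnj zo)))"
    have fd: "(f has_vector_derivative (- transpose (Xmat uo (u y t) zo) *v f y)) (at y)" for y
      using has_vector_derivative_diff[OF adj_jost(1)[OF A_M2 zoIm] conj_jost(1)[OF J_M2 czIm]]
      by (simp add: f_def matrix_vector_mult_diff_distrib)
    have "((\<lambda>y. exp (\<i> * ph2 a1 a2 uo y t zo) *s psiM2 y t zo - exp (\<i> * ph2 a1 a2 uo y t zo) *s vcnj (phiM2 y t (cnj zo)))
           \<longlongrightarrow> col3 2 (Gtmat uo um zo) - col3 2 (Gtmat uo um zo)) at_bot"
      using tendsto_diff[OF adj_jost(2)[OF A_M2 zoIm] conj_jost(2)[OF J_M2 czIm]] by (simp add: phase_simps)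
    then have lim: "((\<lambda>y. exp (\<i> * ph2 a1 a2 uo y t zo) *s f y) \<longlongrightarrow> 0) at_bot"
      by (simp add: f_def smult_diff)
    have "f x = 0" by (rule U2[OF uo_pos num zo_in ud L1m fd lim])
    then show ?thesis by (simp add: f_def)
  qed
  have S3: "psiP3 x t w = \<alpha> *s psiP1 x t zo" for x t
  proof -
    define f where "f = (\<lambda>y. psiP3 y t w - \<alpha> *s psiP1 y t zo)"
    have fd: "(f has_vector_derivative (- transpose (Xmat uo (u y t) zo) *v f y)) (at y)" for y
    proof -
      have "(f has_vector_derivative (- transpose (Xmat uo (u y t) w) *v psiP3 y t w)
             - \<alpha> *s (- transpose (Xmat uo (u y t) zo) *v psiP1 y t zo)) (at y)"
        unfolding f_def
        by (intro has_vector_derivative_diff adj_jost(1)[OF A_P3 wR]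
              bounded_linear.has_vector_derivative[OF bl adj_jost(1)[OF A_P1 zo_in]])
      moreover have "(- transpose (Xmat uo (u y t) zo)) *v (\<alpha> *s psiP1 y t zo)
          = \<alpha> *s ((- transpose (Xmat uo (u y t) zo)) *v psiP1 y t zo)"
        by (simp add: vec_eq_iff matrix_vector_mult_def sum_distrib_left algebra_simps)
      ultimately show ?thesis by (simp add: f_def Xw matrix_vector_mult_diff_distrib)
    qed
    have l1: "((\<lambda>y. exp (\<i> * ph1 a1 a2 uo y t zo) *s psiP3 y t w) \<longlongrightarrow> col3 3 (Gtmat uo up w)) at_top"
      using adj_jost(2)[OF A_P3 wR] by (simp add: phase_simps ph1w)
    have l2: "((\<lambda>y. \<alpha> *s (exp (\<i> * ph1 a1 a2 uo y t zo) *s psiP1 y t zo)) \<longlongrightarrow> \<alpha> *s col3 1 (Gtmat uo up zo)) at_top"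
      using bounded_linear.tendsto[OF bl adj_jost(2)[OF A_P1 zo_in]] by (simp add: phase_simps)
    have "((\<lambda>y. exp (\<i> * ph1 a1 a2 uo y t zo) *s psiP3 y t w - \<alpha> *s (exp (\<i> * ph1 a1 a2 uo y t zo) *s psiP1 y t zo))
           \<longlongrightarrow> col3 3 (Gtmat uo up w) - \<alpha> *s col3 1 (Gtmat uo up zo)) at_top"
      by (rule tendsto_diff[OF l1 l2])
    then have lim: "((\<lambda>y. exp (\<i> * ph1 a1 a2 uo y t zo) *s f y) \<longlongrightarrow> 0) at_top"
      by (simp add: f_def smult_diff smult_smult mult.commute G1)
    have "f x = 0" by (rule U1[OF uo_pos nup zo_in ud L1p fd lim])
    then show ?thesis by (simp add: f_def)
  qed
  have S4: "psiM2 x t w = psiM2 x t zo" for x t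
  proof -
    define f where "f = (\<lambda>y. psiM2 y t w - psiM2 y t zo)"
    have fd: "(f has_vector_derivative (- transpose (Xmat uo (u y t) zo) *v f y)) (at y)" for y
      using has_vector_derivative_diff[OF adj_jost(1)[OF A_M2 wIm] adj_jost(1)[OF A_M2 zoIm]]
      by (simp add: f_def Xw matrix_vector_mult_diff_distrib)
    have "((\<lambda>y. exp (\<i> * ph2 a1 a2 uo y t zo) *s psiM2 y t w - exp (\<i> * ph2 a1 a2 uo y t zo) *s psiM2 y t zo)
           \<longlongrightarrow> col3 2 (Gtmat uo um w) - col3 2 (Gtmat uo um zo)) at_bot"
      using tendsto_diff[OF adj_jost(2)[OF A_M2 wIm] adj_jost(2)[OF A_M2 zoIm]] by (simp add: phase_simps ph2w)
    then have lim: "((\<lambda>y. exp (\<i> * ph2 a1 a2 uo y t zo) *s f y) \<longlongrightarrow> 0) at_bot"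
      using col_G2[of uo um w zo] by (simp add: f_def smult_diff)
    have "f x = 0" by (rule U2[OF uo_pos num zo_in ud L1m fd lim])
    then show ?thesis by (simp add: f_def)
  qed
  have S5: "vcnj (phiP3 x t (cnj w)) = \<alpha> *s vcnj (phiP1 x t (cnj zo))" for x t
  proof -
    define f where "f = (\<lambda>y. vcnj (phiP3 y t (cnj w)) - \<alpha> *s vcnj (phiP1 y t (cnj zo)))"
    have fd: "(f has_vector_derivative (- transpose (Xmat uo (u y t) zo) *v f y)) (at y)" for y
    proof -
      have "(f has_vector_derivative (- transpose (Xmat uo (u y t) w) *v vcnj (phiP3 y t (cnj w)))
             - \<alpha> *s (- transpose (Xmat uo (u y t) zo) *v vcnj (phiP1 y t (cnj zo)))) (at y)"
        unfolding f_def
        by (intro has_vector_derivative_diff conj_jost(1)[OF J_P3 cwR]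
              bounded_linear.has_vector_derivative[OF bl conj_jost(1)[OF J_P1 czR]])
      moreover have "(- transpose (Xmat uo (u y t) zo)) *v (\<alpha> *s vcnj (phiP1 y t (cnj zo)))
          = \<alpha> *s ((- transpose (Xmat uo (u y t) zo)) *v vcnj (phiP1 y t (cnj zo)))"
        by (simp add: vec_eq_iff matrix_vector_mult_def sum_distrib_left algebra_simps)
      ultimately show ?thesis by (simp add: f_def Xw matrix_vector_mult_diff_distrib)
    qed
    have l1: "((\<lambda>y. exp (\<i> * ph1 a1 a2 uo y t zo) *s vcnj (phiP3 y t (cnj w))) \<longlongrightarrow> col3 3 (Gtmat uo up w)) at_top"
      using conj_jost(2)[OF J_P3 cwR] by (simp add: phase_simps ph1w)
    have l2: "((\<lambda>y. \<alpha> *s (exp (\<i> * ph1 a1 a2 uo y t zo) *s vcnj (phiP1 y t (cnj zo)))) \<longlongrightarrow> \<alpha> *s col3 1 (Gtmat uo up zo)) at_top"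
      using bounded_linear.tendsto[OF bl conj_jost(2)[OF J_P1 czR]] by (simp add: phase_simps)
    have "((\<lambda>y. exp (\<i> * ph1 a1 a2 uo y t zo) *s vcnj (phiP3 y t (cnj w)) - \<alpha> *s (exp (\<i> * ph1 a1 a2 uo y t zo) *s vcnj (phiP1 y t (cnj zo))))
           \<longlongrightarrow> col3 3 (Gtmat uo up w) - \<alpha> *s col3 1 (Gtmat uo up zo)) at_top"
      by (rule tendsto_diff[OF l1 l2])
    then have lim: "((\<lambda>y. exp (\<i> * ph1 a1 a2 uo y t zo) *s f y) \<longlongrightarrow> 0) at_top"
      by (simp add: f_def smult_diff smult_smult mult.commute G1)
    have "f x = 0" by (rule U1[OF uo_pos nup zo_in ud L1p fd lim])
    then show ?thesis by (simp add: f_def)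
  qed
  have S6: "vcnj (phiM2 x t (cnj w)) = vcnj (phiM2 x t (cnj zo))" for x t
  proof -
    define f where "f = (\<lambda>y. vcnj (phiM2 y t (cnj w)) - vcnj (phiM2 y t (cnj zo)))"
    have fd: "(f has_vector_derivative (- transpose (Xmat uo (u y t) zo) *v f y)) (at y)" for y
      using has_vector_derivative_diff[OF conj_jost(1)[OF J_M2 cwIm] conj_jost(1)[OF J_M2 czIm]]
      by (simp add: f_def Xw matrix_vector_mult_diff_distrib)
    have "((\<lambda>y. exp (\<i> * ph2 a1 a2 uo y t zo) *s vcnj (phiM2 y t (cnj w)) - exp (\<i> * ph2 a1 a2 uo y t zo) *s vcnj (phiM2 y t (cnj zo)))
           \<longlongrightarrow> col3 2 (Gtmat uo um w) - col3 2 (Gtmat uo um zo)) at_bot"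
      using tendsto_diff[OF conj_jost(2)[OF J_M2 cwIm] conj_jost(2)[OF J_M2 czIm]] by (simp add: phase_simps ph2w)
    then have lim: "((\<lambda>y. exp (\<i> * ph2 a1 a2 uo y t zo) *s f y) \<longlongrightarrow> 0) at_bot"
      using col_G2[of uo um w zo] by (simp add: f_def smult_diff)
    have "f x = 0" by (rule U2[OF uo_pos num zo_in ud L1m fd lim])
    then show ?thesis by (simp add: f_def)
  qed
  define P where "P x t = phiP1 x t (cnj zo)" for x t
  define M where "M x t = phiM2 x t (cnj zo)" for x t
  have rho1_eq: "rho1 x t zo = exp (\<i> * ph2 a1 a2 uo x t zo) *s vcnj (cross3c (P x t) (M x t))" for x t
    by (simp add: rho1_def S1 S2 cross_vcnj P_def M_def)
  have partA: "(\<forall>x t. rho1 x t zo = 0) \<longleftrightarrow> (\<forall>x t. cross3c (P x t) (M x t) = 0)"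
    by (simp add: rho1_eq smult_eq_0 vcnj_zero_iff)
  have rho4_eq: "rho4 x t w = (- \<alpha>) *s rho1 x t zo" for x t
    by (simp add: rho4_def rho1_def S3 S4 ph2w cross3c_def vec_eq_iff forall_3 algebra_simps)
  have part1: "(\<forall>x t. rho1 x t zo = 0) \<longleftrightarrow> (\<forall>x t. rho4 x t w = 0)"
    using a0 by (simp add: rho4_eq smult_eq_0)
  have uc: "continuous_on UNIV (\<lambda>x. u x t)" for t
    by (rule continuous_on_vector_derivative) (use ud in blast)
  have Pnz: "\<exists>x. P x t \<noteq> 0" for t
    unfolding P_def by (rule nz_from_lim[OF jost_d(3)[OF J_P1 czR] _ col_G1_nz]) simp
  have um0: "um \<noteq> 0" using num uo_pos by auto
  have Mnz: "\<exists>x. M x t \<noteq> 0" for t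
    unfolding M_def by (rule nz_from_lim[OF jost_d(3)[OF J_M2 czIm] _ col_G2_nz[OF um0 uo0]]) simp
  have part2: "(\<forall>x t. cross3c (P x t) (M x t) = 0) \<longleftrightarrow> (\<exists>c. c \<noteq> 0 \<and> (\<forall>x t. M x t = c *s P x t))"
  proof
    assume cr: "\<forall>x t. cross3c (P x t) (M x t) = 0"
    have Pd: "((\<lambda>y. P y t) has_vector_derivative Xmat uo (u x t) (cnj zo) *v P x t) (at x)" for x t
      using jost_d(1)[OF J_P1 czR] by (simp add: P_def)
    have Md: "((\<lambda>y. M y t) has_vector_derivative Xmat uo (u x t) (cnj zo) *v M x t) (at x)" for x t
      using jost_d(1)[OF J_M2 czIm] by (simp add: M_def)
    have Pt: "((\<lambda>s. P x s) has_vector_derivative Tmat a1 a2 uo (u x t) (ux x t) (uxx x t) (cnj zo) *v P x t) (at t)" for x t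
      using jost_d(2)[OF J_P1 czR] by (simp add: P_def)
    have Mt: "((\<lambda>s. M x s) has_vector_derivative Tmat a1 a2 uo (u x t) (ux x t) (uxx x t) (cnj zo) *v M x t) (at t)" for x t
      using jost_d(2)[OF J_M2 czIm] by (simp add: M_def)
    obtain c where c: "\<And>x t. M x t = c *s P x t"
      using PAR[OF Pd Md Pt Mt cont_Xp[OF uc] Pnz] cr by blast
    have "c \<noteq> 0"
    proof
      assume "c = 0"
      then have "M x 0 = 0" for x using c[of x 0] by (simp add: vec_eq_iff)
      then show False using Mnz[of 0] by blast
    qed
    then show "\<exists>c. c \<noteq> 0 \<and> (\<forall>x t. M x t = c *s P x t)" using c by blast
  next
    assume "\<exists>c. c \<noteq> 0 \<and> (\<forall>x t. M x t = c *s P x t)"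
    then show "\<forall>x t. cross3c (P x t) (M x t) = 0" by (auto simp: cross_scale_self)
  qed
  have M_wc: "phiM2 x t wc = M x t" for x t
    using arg_cong[OF S6[of x t], of vcnj] by (simp add: vcnj_vcnj cw M_def)
  have P_wc: "phiP3 x t wc = cnj \<alpha> *s P x t" for x t
    using arg_cong[OF S5[of x t], of vcnj] by (simp add: vcnj_vcnj vcnj_scale cw P_def)
  have ca0: "cnj \<alpha> \<noteq> 0" using a0 by simp
  have part3: "(\<exists>c. c \<noteq> 0 \<and> (\<forall>x t. M x t = c *s P x t)) \<longleftrightarrow>
               (\<exists>c. c \<noteq> 0 \<and> (\<forall>x t. phiM2 x t wc = c *s phiP3 x t wc))"
  proof
    assume "\<exists>c. c \<noteq> 0 \<and> (\<forall>x t. M x t = c *s P x t)"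
    then obtain c where c: "c \<noteq> 0" "\<And>x t. M x t = c *s P x t" by blast
    have "phiM2 x t wc = (c / cnj \<alpha>) *s phiP3 x t wc" for x t
    proof -
      have "(c / cnj \<alpha>) *s phiP3 x t wc = (c / cnj \<alpha> * cnj \<alpha>) *s P x t"
        unfolding P_wc smult_smult ..
      also have "\<dots> = c *s P x t" using ca0 by simp
      finally show ?thesis unfolding M_wc c(2) by simp
    qed
    moreover have "c / cnj \<alpha> \<noteq> 0" using c(1) ca0 by simp
    ultimately show "\<exists>c. c \<noteq> 0 \<and> (\<forall>x t. phiM2 x t wc = c *s phiP3 x t wc)" by blast
  next
    assume "\<exists>c. c \<noteq> 0 \<and> (\<forall>x t. phiM2 x t wc = c *s phiP3 x t wc)"
    then obtain c where c: "c \<noteq> 0" "\<And>x t. phiM2 x t wc = c *s phiP3 x t wc" by blast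
    have "M x t = (c * cnj \<alpha>) *s P x t" for x t
      using c(2)[of x t] unfolding M_wc P_wc smult_smult .
    moreover have "c * cnj \<alpha> \<noteq> 0" using c(1) ca0 by simp
    ultimately show "\<exists>c. c \<noteq> 0 \<and> (\<forall>x t. M x t = c *s P x t)" by blast
  qed
  have e1: "(\<exists>c. c \<noteq> 0 \<and> (\<forall>x t. phiM2 x t (cnj zo) = c *s phiP1 x t (cnj zo)))
      \<longleftrightarrow> (\<exists>c. c \<noteq> 0 \<and> (\<forall>x t. M x t = c *s P x t))" by (simp add: P_def M_def)
  have A1: "(\<forall>x t. rho1 x t zo = 0) \<longleftrightarrow> (\<exists>c. c \<noteq> 0 \<and> (\<forall>x t. M x t = c *s P x t))"
    using partA part2 by (rule trans)
  show ?thesis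
    unfolding w_def[symmetric] wc_def[symmetric] e1
    using part1 A1 part3 by (intro conjI) (rule part1, rule A1, rule trans[OF A1 part3])
qed

end
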